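(* Let $t,n$ be integers with $n\ge 1$ and $\gcd(t,n)=1$, let $c\in\mathbb C^*$ with $|q|^{1/n}<|c|\le 1$, and let $E:=\mathrm{Res}(E(cz^{t/n}))$, the difference module $\hat K_n e$ with $\Phi e=cz^{t/n}e$ viewed as a difference module over $\hat K$. Then: (1) up to isomorphism, $E$ depends only on $t$, $n$ and $c^n$; (2) $E$ is irreducible, of dimension $n$ over $\hat K$, pure of slope $t/n$, and the algebra of $\hat K$-linear endomorphisms of $E$ commuting with $\Phi$ is $\mathbb C$; (3) every irreducible difference module $I$ over $\hat K$ is isomorphic to $\mathrm{Res}(E(cz^{t/n}))$ for unique $t,n,c^n$ with $n\ge1$, $\gcd(t,n)=1$ and $|q|<|c^n|\le 1$.
   Context: Fix $q\in\mathbb C$ with $0<|q|<1$ and $\tau$ in the upper half plane with $e^{2\pi i\tau}=q$; for $\lambda\in\mathbb Q$ put $q^\lambda:=e^{2\pi i\tau\lambda}$. A difference module over a difference field $(F,\phi)$ is a finite-dimensional $F$-vector space $M$ with an additive bijection $\Phi$ satisfying $\Phi(fm)=\phi(f)\Phi(m)$; morphisms are $F$-linear maps commuting with $\Phi$; irreducible means no $\Phi$-stable subspaces other than $0$ and $M$. $\hat K=\mathbb C((z))$ and $\hat K_n=\hat K(z^{1/n})$ are difference fields via $\phi(z^{\lambda})=q^{\lambda}z^{\lambda}$. For a finite extension $F\subset G$ of difference fields and a difference module $N$ over $G$, $\mathrm{Res}(N)$ is $N$ regarded as a difference module over $F$. Slopes: every difference module $M$ over $\hat K$ is isomorphic to $\hat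 K[\Phi,\Phi^{-1}]/\hat K[\Phi,\Phi^{-1}]L$ (skew Laurent polynomial ring with $\Phi f=\phi(f)\Phi$) for some $L=\Phi^d+a_{d-1}\Phi^{d-1}+\dots+a_0$ with $a_0\ne0$; the Newton polygon of $L$ is the finite part of the boundary of the convex hull of $\bigcup_{i=0}^d\{(i,-\mathrm{ord}_z(a_i)+y)\mid y\le 0\}$ (with $a_d=1$), and $M$ is pure of slope $\lambda$ if this polygon has the single slope $\lambda$. *)

theory Defs
  imports Complex_Main "HOL-Computational_Algebra.Formal_Laurent_Series"
begin

(* q^lambda := exp(2 pi i tau lambda), for rational lambda *)
definition qpow :: "complex \<Rightarrow> rat \<Rightarrow> complex" where
  "qpow \<tau> r = exp (2 * of_real pi * \<i> * \<tau> * of_rat r)"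

(* The field K_n = C((z^{1/n})) is represented by complex fls in the variable w = z^{1/n}
   (so K_1 = K = C((z))).  Its difference automorphism phi(z^(k/n)) = q^(k/n) z^(k/n)
   acts coefficientwise. *)
definition sigma :: "complex \<Rightarrow> nat \<Rightarrow> complex fls \<Rightarrow> complex fls" where
  "sigma \<tau> n f = Abs_fls (\<lambda>k. qpow \<tau> (of_int k / of_nat n) * fls_nth f k)"

abbreviation phiK :: "complex \<Rightarrow> complex fls \<Rightarrow> complex fls" where
  "phiK \<tau> \<equiv> sigma \<tau> 1"

(* the inclusion K \<subseteq> K_n, z \<mapsto> w^n *)
definition emb :: "nat \<Rightarrow> complex fls \<Rightarrow> complex fls" where
  "emb n f = Abs_fls (\<lambda>k. if int n dvd k then fls_nth f (k div int n) else 0)"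

definition diff_module ::
  "('f::field \<Rightarrow> 'f) \<Rightarrow> ('f \<Rightarrow> 'b::ab_group_add \<Rightarrow> 'b) \<Rightarrow> ('b \<Rightarrow> 'b) \<Rightarrow> bool" where
  "diff_module \<phi> sc \<Phi> \<longleftrightarrow>
     vector_space sc \<and> (\<exists>B. finite B \<and> module.span sc B = UNIV) \<and>
     bij \<Phi> \<and> (\<forall>x y. \<Phi> (x + y) = \<Phi> x + \<Phi> y) \<and>
     (\<forall>f m. \<Phi> (sc f m) = sc (\<phi> f) (\<Phi> m))"

definition diff_iso ::
  "('f::field \<Rightarrow> 'b::ab_group_add \<Rightarrow> 'b) \<Rightarrow> ('b \<Rightarrow> 'b) \<Rightarrow>
   ('f \<Rightarrow> 'c::ab_group_add \<Rightarrow> 'c) \<Rightarrow> ('c \<Rightarrow> 'c) \<Rightarrow> bool" where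
  "diff_iso sc1 \<Phi>1 sc2 \<Phi>2 \<longleftrightarrow>
     (\<exists>h. bij h \<and> Vector_Spaces.linear sc1 sc2 h \<and> (\<forall>m. h (\<Phi>1 m) = \<Phi>2 (h m)))"

definition irreducible_dm :: "('f::field \<Rightarrow> 'b::ab_group_add \<Rightarrow> 'b) \<Rightarrow> ('b \<Rightarrow> 'b) \<Rightarrow> bool" where
  "irreducible_dm sc \<Phi> \<longleftrightarrow>
     (\<exists>m::'b. m \<noteq> 0) \<and>
     (\<forall>S. module.subspace sc S \<and> \<Phi> ` S \<subseteq> S \<longrightarrow> S = {0} \<or> S = UNIV)"

definition diff_End :: "('f::field \<Rightarrow> 'b::ab_group_add \<Rightarrow> 'b) \<Rightarrow> ('b \<Rightarrow> 'b) \<Rightarrow> ('b \<Rightarrow> 'b) set" where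
  "diff_End sc \<Phi> = {h. Vector_Spaces.linear sc sc h \<and> (\<forall>m. h (\<Phi> m) = \<Phi> (h m))}"

(* M is isomorphic to K[Phi,Phi^-1]/K[Phi,Phi^-1]L with L = Phi^d + a_(d-1) Phi^(d-1) + ... + a_0,
   a_0 \<noteq> 0: i.e. there is e (the class of 1) with e, Phi e, ..., Phi^(d-1) e a basis and L e = 0.
   Newton polygon of L (with a_d = 1) has the single slope lambda: the points (i, -ord a_i)
   all lie on or below the segment from (0, -ord a_0) to (d, 0), which has slope lambda. *)
definition pure_of_slope :: "(complex fls \<Rightarrow> 'b::ab_group_add \<Rightarrow> 'b) \<Rightarrow> ('b \<Rightarrow> 'b) \<Rightarrow> rat \<Rightarrow> bool" where
  "pure_of_slope sc \<Phi> s \<longleftrightarrow>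
     (\<exists>d::nat. \<exists>a::nat \<Rightarrow> complex fls. \<exists>e::'b.
        0 < d \<and> a 0 \<noteq> 0 \<and>
        inj_on (\<lambda>i. (\<Phi> ^^ i) e) {..<d} \<and>
        \<not> module.dependent sc ((\<lambda>i. (\<Phi> ^^ i) e) ` {..<d}) \<and>
        module.span sc ((\<lambda>i. (\<Phi> ^^ i) e) ` {..<d}) = UNIV \<and>
        (\<Phi> ^^ d) e + (\<Sum>i<d. sc (a i) ((\<Phi> ^^ i) e)) = 0 \<and>
        of_int (fls_subdegree (a 0)) = s * of_nat d \<and>
        (\<forall>i<d. a i \<noteq> 0 \<longrightarrow> of_int (fls_subdegree (a i)) \<ge> s * of_nat (d - i)))"

(* Res(E(c z^(t/n))): the module K_n e with Phi e = c z^(t/n) e, viewed over K.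
   Carrier K_n (element f stands for f e); K acts through emb n. *)
definition E_scale :: "nat \<Rightarrow> complex fls \<Rightarrow> complex fls \<Rightarrow> complex fls" where
  "E_scale n f m = emb n f * m"

definition E_Phi :: "complex \<Rightarrow> int \<Rightarrow> nat \<Rightarrow> complex \<Rightarrow> complex fls \<Rightarrow> complex fls" where
  "E_Phi \<tau> t n c m = fls_const c * fls_X_intpow t * sigma \<tau> n m"

end

theory Submission
  imports Defs "HOL-Computational_Algebra.Fundamental_Theorem_Algebra"
begin

unbundle fps_syntax

definition cmul :: "(int \<Rightarrow> complex) \<Rightarrow> complex fls \<Rightarrow> complex fls" where
  "cmul \<chi> f = Abs_fls (\<lambda>k. \<chi> k * f $$ k)"

lemma cmul_nth[simp]: "cmul \<chi> f $$ k = \<chi> k * f $$ k"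
  unfolding cmul_def by (rule nth_Abs_fls_lower_bound[of "fls_subdegree f"]) auto

definition is_char :: "(int \<Rightarrow> complex) \<Rightarrow> bool" where
  "is_char \<chi> \<longleftrightarrow> \<chi> 0 = 1 \<and> (\<forall>a b. \<chi> (a + b) = \<chi> a * \<chi> b)"

lemma char_nz: assumes "is_char \<chi>" shows "\<chi> k \<noteq> 0"
proof
  assume "\<chi> k = 0"
  have "\<chi> (k + - k) = \<chi> k * \<chi> (-k)" using assms unfolding is_char_def by blast
  then show False using assms \<open>\<chi> k = 0\<close> unfolding is_char_def by simp
qed

lemma char_add: "is_char \<chi> \<Longrightarrow> \<chi> (a + b) = \<chi> a * \<chi> b"
  unfolding is_char_def by blast

lemma char_0: "is_char \<chi> \<Longrightarrow> \<chi> 0 = 1"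
  unfolding is_char_def by blast

lemma cmul_0[simp]: "cmul \<chi> 0 = 0"
  by (rule fls_eqI) simp

lemma cmul_add: "cmul \<chi> (f + g) = cmul \<chi> f + cmul \<chi> g"
  by (rule fls_eqI) (simp add: algebra_simps)

lemma cmul_uminus: "cmul \<chi> (- f) = - cmul \<chi> f"
  by (rule fls_eqI) (simp add: algebra_simps)

lemma cmul_diff: "cmul \<chi> (f - g) = cmul \<chi> f - cmul \<chi> g"
  by (rule fls_eqI) (simp add: algebra_simps)

lemma cmul_sum: "cmul \<chi> (\<Sum>x\<in>A. f x) = (\<Sum>x\<in>A. cmul \<chi> (f x))"
  by (rule fls_eqI) (simp add: fls_nth_sum sum_distrib_left)

lemma cmul_eq0_iff: assumes "is_char \<chi>" shows "cmul \<chi> f = 0 \<longleftrightarrow> f = 0"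
proof
  assume "cmul \<chi> f = 0"
  then have "\<And>k. \<chi> k * f $$ k = 0" by (metis cmul_nth fls_zero_nth)
  then show "f = 0" using char_nz[OF assms] by (intro fls_zero_eqI) simp
qed simp

lemma cmul_subdegree: assumes "is_char \<chi>" shows "fls_subdegree (cmul \<chi> f) = fls_subdegree f"
proof (cases "f = 0")
  case True then show ?thesis by simp
next
  case False
  show ?thesis
    by (rule fls_subdegree_eqI) (use False char_nz[OF assms] in auto)
qed

lemma cmul_mult: assumes "is_char \<chi>" shows "cmul \<chi> (f * g) = cmul \<chi> f * cmul \<chi> g"
proof (rule fls_eqI)
  fix N
  have "cmul \<chi> (f * g) $$ N = \<chi> N * (\<Sum>i = fls_subdegree f..N - fls_subdegree g. f $$ i * g $$ (N - i))"
    by (simp add: fls_times_nth(2))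
  also have "\<dots> = (\<Sum>i = fls_subdegree f..N - fls_subdegree g. (\<chi> i * f $$ i) * (\<chi> (N - i) * g $$ (N - i)))"
    unfolding sum_distrib_left
  proof (rule sum.cong[OF refl])
    fix i
    have "\<chi> N = \<chi> i * \<chi> (N - i)" using char_add[OF assms, of i "N - i"] by simp
    then show "\<chi> N * (f $$ i * g $$ (N - i)) = \<chi> i * f $$ i * (\<chi> (N - i) * g $$ (N - i))"
      by (simp add: algebra_simps)
  qed
  also have "\<dots> = (cmul \<chi> f * cmul \<chi> g) $$ N"
    by (simp add: fls_times_nth(2) cmul_subdegree[OF assms])
  finally show "cmul \<chi> (f * g) $$ N = (cmul \<chi> f * cmul \<chi> g) $$ N" .
qed

lemma cmul_const: assumes "is_char \<chi>" shows "cmul \<chi> (fls_const a) = fls_const a"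
  by (rule fls_eqI) (simp add: char_0[OF assms])

lemma cmul_one: assumes "is_char \<chi>" shows "cmul \<chi> 1 = 1"
  using cmul_const[OF assms, of 1] by simp

lemma cmul_X: "cmul \<chi> (fls_X_intpow i) = fls_const (\<chi> i) * fls_X_intpow i"
  by (rule fls_eqI) simp

lemma cmul_comp: "cmul \<chi>1 (cmul \<chi>2 f) = cmul (\<lambda>k. \<chi>1 k * \<chi>2 k) f"
  by (rule fls_eqI) (simp add: algebra_simps)

lemma cmul_one_char: "cmul (\<lambda>k. 1) f = f"
  by (rule fls_eqI) simp

lemma is_char_mult: "is_char \<chi>1 \<Longrightarrow> is_char \<chi>2 \<Longrightarrow> is_char (\<lambda>k. \<chi>1 k * \<chi>2 k)"
  unfolding is_char_def by (simp add: algebra_simps)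

lemma is_char_power: "is_char \<chi> \<Longrightarrow> is_char (\<lambda>k. \<chi> k ^ m)"
  unfolding is_char_def by (simp add: power_mult_distrib)

lemma is_char_inverse: "is_char \<chi> \<Longrightarrow> is_char (\<lambda>k. inverse (\<chi> k))"
  unfolding is_char_def by (simp add: algebra_simps)

lemma cmul_inverse_cancel: "is_char \<chi> \<Longrightarrow> cmul (\<lambda>k. inverse (\<chi> k)) (cmul \<chi> f) = f"
  by (rule fls_eqI) (simp add: char_nz)

lemma cmul_inverse_cancel2: "is_char \<chi> \<Longrightarrow> cmul \<chi> (cmul (\<lambda>k. inverse (\<chi> k)) f) = f"
  by (rule fls_eqI) (simp add: char_nz)

lemma qpow_add: "qpow \<tau> (a + b) = qpow \<tau> a * qpow \<tau> b"
  unfolding qpow_def by (simp add: of_rat_add distrib_left exp_add)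

lemma qpow_0[simp]: "qpow \<tau> 0 = 1"
  unfolding qpow_def by simp

lemma qpow_nz[simp]: "qpow \<tau> r \<noteq> 0"
  unfolding qpow_def by simp

lemma qpow_mult_nat: "qpow \<tau> r ^ m = qpow \<tau> (of_nat m * r)"
  by (induction m) (simp_all add: qpow_add algebra_simps)

lemma complex_of_rat_real: "(of_rat r :: complex) = of_real (of_rat r)"
  by (cases r) (simp add: of_rat_rat)

lemma norm_qpow: "norm (qpow \<tau> r) = exp (- 2 * pi * Im \<tau> * of_rat r)"
  unfolding qpow_def norm_exp_eq_Re by (simp add: complex_of_rat_real)

definition qch :: "complex \<Rightarrow> nat \<Rightarrow> int \<Rightarrow> complex" where
  "qch \<tau> n k = qpow \<tau> (of_int k / of_nat n)"

lemma is_char_qch: "is_char (qch \<tau> n)"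
  unfolding is_char_def qch_def by (simp add: add_divide_distrib qpow_add)

lemma sigma_cmul: "sigma \<tau> n = cmul (qch \<tau> n)"
  unfolding sigma_def cmul_def qch_def by (rule ext) simp

lemma emb_nth: assumes "n \<ge> 1"
  shows "emb n f $$ k = (if int n dvd k then f $$ (k div int n) else 0)"
  unfolding emb_def
proof (rule nth_Abs_fls_lower_bound[of "int n * fls_subdegree f"], intro allI impI)
  fix k assume k: "k < int n * fls_subdegree f"
  show "(if int n dvd k then f $$ (k div int n) else 0) = 0"
  proof (cases "int n dvd k")
    case True
    then obtain m where m: "k = int n * m" by blast
    with k assms have "m < fls_subdegree f" by (simp add: mult_less_cancel_left)
    then show ?thesis using m assms by simp
  qed simp
qed

lemma emb_0[simp]: "n \<ge> 1 \<Longrightarrow> emb n 0 = 0"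
  by (rule fls_eqI) (simp add: emb_nth)

lemma emb_add: "n \<ge> 1 \<Longrightarrow> emb n (f + g) = emb n f + emb n g"
  by (rule fls_eqI) (simp add: emb_nth)

lemma emb_uminus: "n \<ge> 1 \<Longrightarrow> emb n (- f) = - emb n f"
  by (rule fls_eqI) (simp add: emb_nth)

lemma emb_diff: "n \<ge> 1 \<Longrightarrow> emb n (f - g) = emb n f - emb n g"
  by (rule fls_eqI) (simp add: emb_nth)

lemma emb_sum: "n \<ge> 1 \<Longrightarrow> emb n (\<Sum>x\<in>A. f x) = (\<Sum>x\<in>A. emb n (f x))"
  by (rule fls_eqI) (simp add: emb_nth fls_nth_sum)

lemma emb_const: "n \<ge> 1 \<Longrightarrow> emb n (fls_const a) = fls_const a"
  by (rule fls_eqI) (auto simp add: emb_nth)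

lemma emb_one: "n \<ge> 1 \<Longrightarrow> emb n 1 = 1"
  using emb_const[of n 1] by simp

lemma emb_X: "n \<ge> 1 \<Longrightarrow> emb n (fls_X_intpow i) = fls_X_intpow (int n * i)"
  by (rule fls_eqI) (auto simp add: emb_nth)

lemma emb_eq0_iff: assumes "n \<ge> 1" shows "emb n f = 0 \<longleftrightarrow> f = 0"
proof
  assume "emb n f = 0"
  then have "\<And>k. emb n f $$ (int n * k) = 0" by simp
  then show "f = 0" using assms by (intro fls_zero_eqI) (simp add: emb_nth)
qed (use assms in simp)

lemma emb_subdegree: assumes "n \<ge> 1" shows "fls_subdegree (emb n f) = int n * fls_subdegree f"
proof (cases "f = 0")
  case True then show ?thesis using assms by simp
next
  case False
  show ?thesis
  proof (rule fls_subdegree_eqI)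
    show "emb n f $$ (int n * fls_subdegree f) \<noteq> 0" using assms False by (simp add: emb_nth)
    fix k assume k: "k < int n * fls_subdegree f"
    show "emb n f $$ k = 0"
    proof (cases "int n dvd k")
      case True
      then obtain m where m: "k = int n * m" by blast
      with k assms have "m < fls_subdegree f" by (simp add: mult_less_cancel_left)
      then show ?thesis using m assms by (simp add: emb_nth)
    qed (use assms in \<open>simp add: emb_nth\<close>)
  qed
qed

lemma sum_dvd_reindex:
  fixes n :: int and h :: "int \<Rightarrow> 'a::comm_monoid_add"
  assumes n: "n > 0" and h: "\<And>i. \<not> n dvd i \<Longrightarrow> h i = 0"
  shows "(\<Sum>i\<in>{n*a..n*b}. h i) = (\<Sum>j\<in>{a..b}. h (n*j))"
proof -
  have inj: "inj_on (\<lambda>j. n * j) {a..b}" using n by (auto simp: inj_on_def)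
  have "(\<Sum>j\<in>{a..b}. h (n*j)) = (\<Sum>i\<in>(\<lambda>j. n*j) ` {a..b}. h i)"
    by (simp add: sum.reindex[OF inj])
  also have "\<dots> = (\<Sum>i\<in>{n*a..n*b}. h i)"
  proof (rule sum.mono_neutral_left)
    show "(\<lambda>j. n*j) ` {a..b} \<subseteq> {n*a..n*b}" using n by auto
    show "\<forall>i\<in>{n * a..n * b} - (\<lambda>j. n*j) ` {a..b}. h i = 0"
    proof
      fix i assume i: "i \<in> {n * a..n * b} - (\<lambda>j. n*j) ` {a..b}"
      show "h i = 0"
      proof (cases "n dvd i")
        case True
        then obtain j where j: "i = n * j" by blast
        with i n have "j \<in> {a..b}" by (auto simp: mult_le_cancel_left)
        with i j show ?thesis by auto
      qed (rule h)
    qed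
  qed simp
  finally show ?thesis by simp
qed

lemma emb_mult: assumes n: "n \<ge> 1" shows "emb n (f * g) = emb n f * emb n g"
proof (rule fls_eqI)
  fix k
  define df dg where "df = fls_subdegree f" and "dg = fls_subdegree g"
  have sdf: "fls_subdegree (emb n f) = int n * df" and sdg: "fls_subdegree (emb n g) = int n * dg"
    using emb_subdegree[OF n] df_def dg_def by auto
  have R: "(emb n f * emb n g) $$ k = (\<Sum>i = int n * df..k - int n * dg. emb n f $$ i * emb n g $$ (k - i))"
    by (simp add: fls_times_nth(2) sdf sdg)
  show "emb n (f * g) $$ k = (emb n f * emb n g) $$ k"
  proof (cases "int n dvd k")
    case False
    have Z: "\<And>i. emb n f $$ i * emb n g $$ (k - i) = 0"
    proof -
      fix i
      show "emb n f $$ i * emb n g $$ (k - i) = 0"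
      proof (cases "int n dvd i")
        case True
        then have "\<not> int n dvd (k - i)" using False by (metis dvd_add_left_iff diff_add_cancel)
        then show ?thesis using n by (simp add: emb_nth)
      qed (use n in \<open>simp add: emb_nth\<close>)
    qed
    have "(emb n f * emb n g) $$ k = 0" unfolding R by (rule sum.neutral) (use Z in blast)
    then show ?thesis using False n by (simp add: emb_nth)
  next
    case True
    then obtain m where m: "k = int n * m" by blast
    have "(emb n f * emb n g) $$ k = (\<Sum>i = int n * df..int n * (m - dg). emb n f $$ i * emb n g $$ (k - i))"
      using R m by (simp add: algebra_simps)
    also have "\<dots> = (\<Sum>j = df..m - dg. emb n f $$ (int n * j) * emb n g $$ (k - int n * j))"
      by (rule sum_dvd_reindex) (use n in \<open>auto simp: emb_nth\<close>)
    also have "\<dots> = (\<Sum>j = df..m - dg. f $$ j * g $$ (m - j))"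
    proof (rule sum.cong[OF refl])
      fix j
      have "k - int n * j = int n * (m - j)" using m by (simp add: algebra_simps)
      then show "emb n f $$ (int n * j) * emb n g $$ (k - int n * j) = f $$ j * g $$ (m - j)"
        using n by (simp add: emb_nth)
    qed
    also have "\<dots> = (f * g) $$ m" by (simp add: fls_times_nth(2) df_def dg_def)
    finally show ?thesis using m n by (simp add: emb_nth)
  qed
qed

lemma sigma_emb: assumes n: "n \<ge> 1" shows "sigma \<tau> n (emb n f) = emb n (sigma \<tau> 1 f)"
proof (rule fls_eqI)
  fix k
  show "sigma \<tau> n (emb n f) $$ k = emb n (sigma \<tau> 1 f) $$ k"
  proof (cases "int n dvd k")
    case True
    then obtain m where m: "k = int n * m" by blast
    have "(of_int (int n * m) / of_nat n :: rat) = of_int m" using n by simp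
    then show ?thesis using m n by (simp add: sigma_cmul emb_nth qch_def)
  qed (use n in \<open>simp add: sigma_cmul emb_nth\<close>)
qed

lemma sum_nonzero_distinct_sd:
  fixes h :: "'a \<Rightarrow> complex fls"
  assumes fin: "finite T" and ne: "T \<noteq> {}" and nz: "\<And>v. v \<in> T \<Longrightarrow> h v \<noteq> 0"
    and inj: "inj_on (\<lambda>v. fls_subdegree (h v)) T"
  shows "(\<Sum>v\<in>T. h v) \<noteq> 0"
proof -
  define m where "m = Min ((\<lambda>v. fls_subdegree (h v)) ` T)"
  have "m \<in> (\<lambda>v. fls_subdegree (h v)) ` T" unfolding m_def using fin ne by (intro Min_in) auto
  then obtain v0 where v0: "v0 \<in> T" "fls_subdegree (h v0) = m" by auto
  have others: "h v $$ m = 0" if "v \<in> T" "v \<noteq> v0" for v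
  proof -
    have "m \<le> fls_subdegree (h v)" unfolding m_def using fin that by auto
    moreover have "fls_subdegree (h v) \<noteq> m" using inj that v0 by (auto simp: inj_on_def)
    ultimately show ?thesis by simp
  qed
  have "(\<Sum>v\<in>T. h v) $$ m = (\<Sum>v\<in>T. h v $$ m)" by (simp add: fls_nth_sum)
  also have "\<dots> = h v0 $$ m + (\<Sum>v\<in>T - {v0}. h v $$ m)"
    using fin v0 by (simp add: sum.remove)
  also have "(\<Sum>v\<in>T - {v0}. h v $$ m) = 0" using others by (intro sum.neutral) auto
  finally have "(\<Sum>v\<in>T. h v) $$ m = h v0 $$ m" by simp
  moreover have "h v0 $$ m \<noteq> 0" using v0 nz by (metis nth_fls_subdegree_nonzero)
  ultimately show ?thesis by (metis fls_zero_nth)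
qed

lemma vs_span_full:
  assumes vs: "vector_space s" and fT: "finite T" and spT: "module.span s T = UNIV"
    and indB: "\<not> module.dependent s B" and cB: "card B \<ge> card T"
  shows "module.span s B = UNIV"
proof (rule ccontr)
  interpret vector_space s by fact
  assume "span B \<noteq> UNIV"
  then obtain x where x: "x \<notin> span B" by auto
  have fB: "finite B" using independent_span_bound[OF fT indB] spT by auto
  have ind2: "independent (insert x B)" using x indB by (simp add: independent_insertI)
  have "finite (insert x B) \<and> card (insert x B) \<le> card T"
    using independent_span_bound[OF fT ind2] spT by auto
  moreover have "x \<notin> B" using x span_base by blast
  ultimately show False using fB cB by simp
qed

locale Emod =
  fixes \<tau> :: complex and t :: int and n :: nat and c :: complex
  assumes n1: "n \<ge> 1" and c0: "c \<noteq> 0"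
begin

abbreviation "sc \<equiv> E_scale n"
abbreviation "Ph \<equiv> E_Phi \<tau> t n c"

lemma vs: "vector_space sc"
  by unfold_locales (simp_all add: E_scale_def emb_add[OF n1] emb_mult[OF n1] emb_one[OF n1] algebra_simps)

lemma Ph_def': "Ph m = fls_const c * fls_X_intpow t * cmul (qch \<tau> n) m"
  by (simp add: E_Phi_def sigma_cmul)

lemma Ph_add: "Ph (x + y) = Ph x + Ph y"
  by (simp add: Ph_def' cmul_add algebra_simps)

lemma Ph_mult: "Ph (f * g) = Ph f * cmul (qch \<tau> n) g"
  by (simp add: Ph_def' cmul_mult[OF is_char_qch] algebra_simps)

lemma cmul_emb: "cmul (qch \<tau> n) (emb n f) = emb n (cmul (qch \<tau> 1) f)"
  using sigma_emb[OF n1, of \<tau> f] by (simp add: sigma_cmul)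

lemma Ph_semilin: "Ph (sc f m) = sc (phiK \<tau> f) (Ph m)"
  by (simp add: E_scale_def Ph_def' sigma_cmul cmul_mult[OF is_char_qch] cmul_emb algebra_simps)

definition R :: "nat \<Rightarrow> complex" where
  "R k = (\<Prod>i<k. qch \<tau> n (t * int i))"

lemma R_nz: "R k \<noteq> 0"
  unfolding R_def using char_nz[OF is_char_qch] by (simp add: prod_zero_iff)

lemma Ph_pow_one: "(Ph ^^ k) 1 = fls_const (c ^ k * R k) * fls_X_intpow (t * int k)"
proof (induction k)
  case 0 then show ?case by (simp add: R_def)
next
  case (Suc k)
  have "(Ph ^^ Suc k) 1 = Ph (fls_const (c ^ k * R k) * fls_X_intpow (t * int k))"
    using Suc by simp
  also have "\<dots> = fls_const c * fls_X_intpow t * (fls_const (c ^ k * R k) * (fls_const (qch \<tau> n (t * int k)) * fls_X_intpow (t * int k)))"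
    by (simp add: Ph_def' cmul_mult[OF is_char_qch] cmul_const[OF is_char_qch] cmul_X)
  also have "\<dots> = fls_const (c ^ Suc k * R (Suc k)) * (fls_X_intpow t * fls_X_intpow (t * int k))"
    by (simp add: R_def fls_const_mult_const[symmetric] algebra_simps del: fls_const_mult_const)
  also have "fls_X_intpow t * fls_X_intpow (t * int k) = (fls_X_intpow (t * int (Suc k)) :: complex fls)"
    by (simp add: fls_X_intpow_times_fls_X_intpow algebra_simps)
  finally show ?case .
qed

lemma cmul_qch_pow: "(cmul (qch \<tau> n) ^^ k) f = cmul (\<lambda>j. qch \<tau> n j ^ k) f"
  by (induction k) (simp_all add: cmul_one_char cmul_comp algebra_simps)

lemma Ph_pow: "(Ph ^^ k) f = (Ph ^^ k) 1 * cmul (\<lambda>j. qch \<tau> n j ^ k) f"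
proof (induction k)
  case 0 then show ?case by (simp add: cmul_one_char)
next
  case (Suc k)
  have "(Ph ^^ Suc k) f = Ph ((Ph ^^ k) 1 * cmul (\<lambda>j. qch \<tau> n j ^ k) f)" using Suc by simp
  also have "\<dots> = (Ph ^^ Suc k) 1 * cmul (\<lambda>j. qch \<tau> n j ^ Suc k) f"
    by (simp add: Ph_mult cmul_comp algebra_simps)
  finally show ?case .
qed

lemma Ph_pow_one_nz: "(Ph ^^ k) 1 \<noteq> 0"
  unfolding Ph_pow_one using c0 R_nz by (simp add: fls_mult_fls_X_intpow_nonzero)

lemma Ph_pow_one_sd: "fls_subdegree ((Ph ^^ k) 1) = t * int k"
  unfolding Ph_pow_one using c0 R_nz by (simp add: fls_subdegree_mult_fls_X_intpow)

lemma Ph_pow_sd: "f \<noteq> 0 \<Longrightarrow> fls_subdegree ((Ph ^^ k) f) = t * int k + fls_subdegree f"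
  apply (subst Ph_pow)
  using Ph_pow_one_nz Ph_pow_one_sd is_char_power[OF is_char_qch]
  by (simp add: cmul_subdegree cmul_eq0_iff)

lemma Ph_pow_nz: "f \<noteq> 0 \<Longrightarrow> (Ph ^^ k) f \<noteq> 0"
  apply (subst Ph_pow)
  using Ph_pow_one_nz is_char_power[OF is_char_qch]
  by (simp add: cmul_eq0_iff)

lemma module_sc: "module sc"
  using vs by (simp add: module_iff_vector_space)

lemma Ph_bij: "bij Ph"
proof -
  define Psi where "Psi m = cmul (\<lambda>k. inverse (qch \<tau> n k)) (fls_const (inverse c) * fls_X_intpow (-t) * m)" for m
  have XX: "fls_X_intpow t * fls_X_intpow (-t) = (1 :: complex fls)"
    using fls_X_intpow_times_fls_X_intpow[of t "-t", where 'a=complex] by simp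
  have cc: "fls_const c * fls_const (inverse c) = (1 :: complex fls)"
    using c0 by (simp add: fls_const_mult_const)
  have 1: "Ph (Psi m) = m" for m
  proof -
    have "Ph (Psi m) = fls_const c * fls_X_intpow t * (fls_const (inverse c) * fls_X_intpow (-t) * m)"
      unfolding Ph_def' Psi_def by (simp add: cmul_inverse_cancel2[OF is_char_qch])
    also have "\<dots> = (fls_const c * fls_const (inverse c)) * (fls_X_intpow t * fls_X_intpow (-t)) * m"
      by (simp add: algebra_simps)
    finally show ?thesis using XX cc by simp
  qed
  have 2: "Psi (Ph m) = m" for m
  proof -
    have "fls_const (inverse c) * fls_X_intpow (-t) * Ph m =
       (fls_const c * fls_const (inverse c)) * (fls_X_intpow t * fls_X_intpow (-t)) * cmul (qch \<tau> n) m"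
      unfolding Ph_def' by (simp add: algebra_simps)
    then have "fls_const (inverse c) * fls_X_intpow (-t) * Ph m = 1 * 1 * cmul (qch \<tau> n) m"
      by (simp only: XX cc)
    then have "fls_const (inverse c) * fls_X_intpow (-t) * Ph m = cmul (qch \<tau> n) m"
      by (simp only: mult_1_left)
    then show ?thesis unfolding Psi_def by (simp add: cmul_inverse_cancel[OF is_char_qch])
  qed
  show ?thesis by (rule o_bij[of Psi]) (auto simp: 1 2)
qed

lemma indep_sd:
  assumes fin: "finite F" and z: "0 \<notin> F"
    and dist: "\<And>x y. x \<in> F \<Longrightarrow> y \<in> F \<Longrightarrow> fls_subdegree x mod int n = fls_subdegree y mod int n \<Longrightarrow> x = y"
  shows "\<not> module.dependent sc F"
proof
  assume "module.dependent sc F"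
  then obtain T u where T: "finite T" "T \<subseteq> F" "(\<Sum>v\<in>T. sc (u v) v) = 0" and v0: "\<exists>v\<in>T. u v \<noteq> 0"
    unfolding module.dependent_explicit[OF module_sc] by blast
  define T' where "T' = {v\<in>T. u v \<noteq> 0}"
  have fT': "finite T'" using T unfolding T'_def by auto
  have neT': "T' \<noteq> {}" using v0 unfolding T'_def by auto
  have "(\<Sum>v\<in>T'. emb n (u v) * v) = (\<Sum>v\<in>T. sc (u v) v)"
    unfolding T'_def E_scale_def by (rule sum.mono_neutral_left) (use T n1 in auto)
  also have "\<dots> = 0" by (rule T)
  finally have S0: "(\<Sum>v\<in>T'. emb n (u v) * v) = 0" .
  have nz: "emb n (u v) * v \<noteq> 0" if "v \<in> T'" for v
    using that z T(2) n1 unfolding T'_def by (auto simp: emb_eq0_iff)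
  have sd: "fls_subdegree (emb n (u v) * v) = int n * fls_subdegree (u v) + fls_subdegree v" if "v \<in> T'" for v
  proof -
    have "v \<noteq> 0" "emb n (u v) \<noteq> 0" using that z T(2) n1 unfolding T'_def by (auto simp: emb_eq0_iff)
    then show ?thesis using n1 by (simp add: fls_subdegree_mult emb_subdegree)
  qed
  have inj: "inj_on (\<lambda>v. fls_subdegree (emb n (u v) * v)) T'"
  proof (rule inj_onI)
    fix x y assume xy: "x \<in> T'" "y \<in> T'" "fls_subdegree (emb n (u x) * x) = fls_subdegree (emb n (u y) * y)"
    then have "(int n * fls_subdegree (u x) + fls_subdegree x) mod int n = (int n * fls_subdegree (u y) + fls_subdegree y) mod int n"
      using sd by simp
    then have "fls_subdegree x mod int n = fls_subdegree y mod int n" by simp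
    then show "x = y" using dist xy T(2) unfolding T'_def by auto
  qed
  show False using sum_nonzero_distinct_sd[OF fT' neT' nz inj] S0 by simp
qed

definition Xs :: "complex fls set" where "Xs = (\<lambda>j. fls_X_intpow (int j)) ` {..<n}"

lemma Xs_fin: "finite Xs" unfolding Xs_def by simp

lemma Xs_card: "card Xs = n"
proof -
  have "inj_on (\<lambda>j. (fls_X_intpow (int j) :: complex fls)) {..<n}"
  proof (rule inj_onI)
    fix x y :: nat assume "(fls_X_intpow (int x) :: complex fls) = fls_X_intpow (int y)"
    then have "fls_subdegree (fls_X_intpow (int x) :: complex fls) = fls_subdegree (fls_X_intpow (int y) :: complex fls)" by simp
    then show "x = y" by simp
  qed
  then show ?thesis unfolding Xs_def by (simp add: card_image)
qed

lemma Xs_indep: "\<not> module.dependent sc Xs"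
proof (rule indep_sd)
  show "finite Xs" by (rule Xs_fin)
  show "0 \<notin> Xs" unfolding Xs_def by auto
  fix x y assume "x \<in> Xs" "y \<in> Xs" "fls_subdegree x mod int n = fls_subdegree y mod int n"
  then obtain i j where "i < n" "j < n" "x = fls_X_intpow (int i)" "y = fls_X_intpow (int j)"
    "int i mod int n = int j mod int n" unfolding Xs_def by auto
  then show "x = y" by simp
qed

lemma Xs_span: "module.span sc Xs = UNIV"
proof -
  have "f \<in> module.span sc Xs" for f
  proof -
    define fj where "fj j = Abs_fls (\<lambda>m. f $$ (int n * m + int j))" for j :: nat
    have fj_nth: "fj j $$ m = f $$ (int n * m + int j)" if "j < n" for j m
      unfolding fj_def
    proof (rule nth_Abs_fls_lower_bound[of "min 0 (fls_subdegree f)"], intro allI impI)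
      fix m assume m: "m < min 0 (fls_subdegree f)"
      have "int n * (m + 1) \<le> 1 * (m + 1)"
        by (rule mult_right_mono_neg) (use n1 m in auto)
      then have "int n * m + int j < fls_subdegree f" using m that by (simp add: algebra_simps)
      then show "f $$ (int n * m + int j) = 0" by simp
    qed
    have key: "(\<Sum>j<n. emb n (fj j) * fls_X_intpow (int j)) = f"
    proof (rule fls_eqI)
      fix k
      have dv: "(int n dvd k - int j) \<longleftrightarrow> j = nat (k mod int n)" if "j < n" for j
      proof -
        have "(int n dvd k - int j) \<longleftrightarrow> k mod int n = int j mod int n" by (simp add: mod_eq_dvd_iff)
        also have "int j mod int n = int j" using that by simp
        finally show ?thesis using n1 by auto
      qed
      have "(\<Sum>j<n. emb n (fj j) * fls_X_intpow (int j)) $$ k = (\<Sum>j<n. (emb n (fj j) * fls_X_intpow (int j)) $$ k)"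
        by (simp add: fls_nth_sum)
      also have "\<dots> = (\<Sum>j<n. if j = nat (k mod int n) then f $$ k else 0)"
      proof (rule sum.cong[OF refl])
        fix j assume j: "j \<in> {..<n}"
        have "(emb n (fj j) * fls_X_intpow (int j)) $$ k = emb n (fj j) $$ (k - int j)"
          by (simp add: fls_X_intpow_times_conv_shift(2))
        also have "\<dots> = (if j = nat (k mod int n) then f $$ k else 0)"
        proof (cases "int n dvd k - int j")
          case True
          then obtain m where m: "k - int j = int n * m" by blast
          then show ?thesis using True dv j n1 by (simp add: emb_nth fj_nth algebra_simps)
        next
          case False then show ?thesis using dv j n1 by (simp add: emb_nth)
        qed
        finally show "(emb n (fj j) * fls_X_intpow (int j)) $$ k = (if j = nat (k mod int n) then f $$ k else 0)" .
      qed
      also have "\<dots> = f $$ k"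
      proof -
        have "nat (k mod int n) < n" using n1 by (simp add: nat_less_iff)
        then show ?thesis by simp
      qed
      finally show "(\<Sum>j<n. emb n (fj j) * fls_X_intpow (int j)) $$ k = f $$ k" .
    qed
    have "(\<Sum>j<n. sc (fj j) (fls_X_intpow (int j))) \<in> module.span sc Xs"
      by (intro module.span_sum[OF module_sc] module.span_scale[OF module_sc] module.span_base[OF module_sc])
         (auto simp: Xs_def)
    then show ?thesis using key by (simp add: E_scale_def)
  qed
  then show ?thesis by auto
qed

lemma dim_n: "vector_space.dim sc (UNIV :: complex fls set) = n"
proof -
  have "module.span sc Xs = module.span sc UNIV"
    using Xs_span module.span_UNIV[OF module_sc] by simp
  then show ?thesis using vector_space.dim_eq_card[OF vs _ Xs_indep] Xs_card by simp
qed

lemma diff_mod: "diff_module (phiK \<tau>) sc Ph"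
  unfolding diff_module_def using vs Xs_fin Xs_span Ph_bij Ph_add Ph_semilin by blast

lemma mod_distinct:
  assumes cop: "coprime t (int n)" and k: "k < n" "k' < n"
    and eq: "(t * int k + a) mod int n = (t * int k' + a) mod int n"
  shows "k = k'"
proof -
  have "int n dvd (t * int k + a) - (t * int k' + a)" using eq by (simp add: mod_eq_dvd_iff)
  then have "int n dvd t * (int k - int k')" by (simp add: algebra_simps)
  then have "int n dvd int k - int k'" using cop
    by (metis coprime_commute coprime_dvd_mult_right_iff)
  then obtain m where m: "int k - int k' = int n * m" by blast
  have "m = 0"
  proof (rule ccontr)
    assume "m \<noteq> 0"
    then have "\<bar>m\<bar> \<ge> 1" by linarith
    then have "int n * \<bar>m\<bar> \<ge> int n * 1" by (intro mult_left_mono) auto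
    then have "\<bar>int n * m\<bar> \<ge> int n" by (simp add: abs_mult)
    then show False using m k by linarith
  qed
  then show ?thesis using m by simp
qed

lemma orbit_basis:
  assumes cop: "coprime t (int n)" and s: "s \<noteq> 0"
  shows "inj_on (\<lambda>k. (Ph ^^ k) s) {..<n}"
    and "\<not> module.dependent sc ((\<lambda>k. (Ph ^^ k) s) ` {..<n})"
    and "module.span sc ((\<lambda>k. (Ph ^^ k) s) ` {..<n}) = UNIV"
proof -
  have sd: "fls_subdegree ((Ph ^^ k) s) = t * int k + fls_subdegree s" for k
    using Ph_pow_sd[OF s] .
  show inj: "inj_on (\<lambda>k. (Ph ^^ k) s) {..<n}"
  proof (rule inj_onI)
    fix x y assume xy: "x \<in> {..<n}" "y \<in> {..<n}" "(Ph ^^ x) s = (Ph ^^ y) s"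
    then have "(t * int x + fls_subdegree s) mod int n = (t * int y + fls_subdegree s) mod int n"
      using sd by metis
    then show "x = y" using mod_distinct[OF cop, of x y "fls_subdegree s"] xy by simp
  qed
  show ind: "\<not> module.dependent sc ((\<lambda>k. (Ph ^^ k) s) ` {..<n})"
  proof (rule indep_sd)
    show "finite ((\<lambda>k. (Ph ^^ k) s) ` {..<n})" by simp
    show "0 \<notin> (\<lambda>k. (Ph ^^ k) s) ` {..<n}" using Ph_pow_nz[OF s] by auto
    fix x y assume "x \<in> (\<lambda>k. (Ph ^^ k) s) ` {..<n}" "y \<in> (\<lambda>k. (Ph ^^ k) s) ` {..<n}"
      "fls_subdegree x mod int n = fls_subdegree y mod int n"
    then obtain i j where ij: "i < n" "j < n" "x = (Ph ^^ i) s" "y = (Ph ^^ j) s"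
      "(t * int i + fls_subdegree s) mod int n = (t * int j + fls_subdegree s) mod int n"
      using sd by auto
    then have "i = j" using mod_distinct[OF cop ij(1,2) ij(5)] by simp
    then show "x = y" using ij by simp
  qed
  have "card ((\<lambda>k. (Ph ^^ k) s) ` {..<n}) = n" using inj by (simp add: card_image)
  then show "module.span sc ((\<lambda>k. (Ph ^^ k) s) ` {..<n}) = UNIV"
    using vs_span_full[OF vs Xs_fin Xs_span ind] Xs_card by simp
qed

lemma Ph_pow_in: "module.subspace sc S \<Longrightarrow> Ph ` S \<subseteq> S \<Longrightarrow> s \<in> S \<Longrightarrow> (Ph ^^ k) s \<in> S"
  by (induction k) auto

lemma irred:
  assumes cop: "coprime t (int n)"
  shows "irreducible_dm sc Ph"
  unfolding irreducible_dm_def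
proof (intro conjI allI impI)
  show "\<exists>m::complex fls. m \<noteq> 0" by (intro exI[of _ 1]) simp
  fix S assume S: "module.subspace sc S \<and> Ph ` S \<subseteq> S"
  show "S = {0} \<or> S = UNIV"
  proof (cases "S = {0}")
    case False
    then obtain s where s: "s \<in> S" "s \<noteq> 0" using module.subspace_0[OF module_sc] S by blast
    have "(\<lambda>k. (Ph ^^ k) s) ` {..<n} \<subseteq> S" using Ph_pow_in S s by auto
    then have "module.span sc ((\<lambda>k. (Ph ^^ k) s) ` {..<n}) \<subseteq> S"
      using module.span_minimal[OF module_sc] S by blast
    then show ?thesis using orbit_basis(3)[OF cop s(2)] by auto
  qed simp
qed

lemma pure:
  assumes cop: "coprime t (int n)"
  shows "pure_of_slope sc Ph (of_int t / of_nat n)"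
proof -
  define a0 where "a0 = - (fls_const (c ^ n * R n) * fls_X_intpow t)"
  define a where "a i = (if i = 0 then a0 else 0)" for i :: nat
  have a0nz: "a0 \<noteq> 0" unfolding a0_def using c0 R_nz by (simp add: fls_mult_fls_X_intpow_nonzero)
  have a0sd: "fls_subdegree a0 = t" unfolding a0_def using c0 R_nz by (simp add: fls_subdegree_mult_fls_X_intpow)
  have sum: "(\<Sum>i<n. sc (a i) ((Ph ^^ i) 1)) = sc a0 1"
  proof -
    have "(\<Sum>i<n. sc (a i) ((Ph ^^ i) 1)) = (\<Sum>i<n. if i = 0 then sc a0 ((Ph ^^ i) 1) else 0)"
      by (rule sum.cong) (auto simp: a_def E_scale_def n1)
    also have "\<dots> = sc a0 1" using n1 by simp
    finally show ?thesis .
  qed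
  have rel: "(Ph ^^ n) 1 + (\<Sum>i<n. sc (a i) ((Ph ^^ i) 1)) = 0"
    apply (subst sum)
    unfolding Ph_pow_one a0_def E_scale_def
    using n1 by (simp add: emb_uminus emb_mult emb_const emb_X algebra_simps)
  have nn: "(of_nat n :: rat) \<noteq> 0" using n1 by simp
  show ?thesis unfolding pure_of_slope_def
    apply (rule exI[of _ n], rule exI[of _ a], rule exI[of _ 1])
    using n1 a0nz orbit_basis[OF cop, of 1] rel a0sd nn by (auto simp: a_def)
qed

lemma vsp: "vector_space_pair sc sc"
  by (simp add: vector_space_pair_def vs)

lemma lin_iff: "Vector_Spaces.linear sc sc h \<longleftrightarrow> (\<forall>x y. h (x + y) = h x + h y) \<and> (\<forall>f x. h (sc f x) = sc f (h x))"
  using vs by (simp add: Vector_Spaces.linear_iff)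

lemma comm_pow: "(\<forall>m. h (Ph m) = Ph (h m)) \<Longrightarrow> h ((Ph ^^ k) m) = (Ph ^^ k) (h m)"
  by (induction k) auto

lemma End:
  assumes tau: "Im \<tau> > 0" and cop: "coprime t (int n)"
  shows "diff_End sc Ph = range (\<lambda>a::complex. sc (fls_const a))"
proof
  show "range (\<lambda>a::complex. sc (fls_const a)) \<subseteq> diff_End sc Ph"
  proof
    fix h assume "h \<in> range (\<lambda>a::complex. sc (fls_const a))"
    then obtain a where h: "h = sc (fls_const a)" by auto
    have lin: "Vector_Spaces.linear sc sc h"
      unfolding lin_iff h E_scale_def using n1 by (simp add: emb_const algebra_simps)
    have "h (Ph m) = Ph (h m)" for m
      unfolding h E_scale_def using n1
      by (simp add: emb_const Ph_def' cmul_mult[OF is_char_qch] cmul_const[OF is_char_qch] algebra_simps)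
    then show "h \<in> diff_End sc Ph" unfolding diff_End_def using lin by auto
  qed
next
  show "diff_End sc Ph \<subseteq> range (\<lambda>a::complex. sc (fls_const a))"
  proof
    fix h assume "h \<in> diff_End sc Ph"
    then have lin: "Vector_Spaces.linear sc sc h" and comm: "\<forall>m. h (Ph m) = Ph (h m)"
      unfolding diff_End_def by auto
    have hsc: "h (sc f x) = sc f (h x)" for f x using lin unfolding lin_iff by blast
    define g where "g = h 1"
    define A where "A = fls_const (c ^ n * R n) * fls_X_intpow t"
    have PA: "(Ph ^^ n) 1 = sc A 1" unfolding Ph_pow_one A_def E_scale_def
      using n1 by (simp add: emb_mult emb_const emb_X algebra_simps)
    have "h ((Ph ^^ n) 1) = sc A g" unfolding PA g_def by (rule hsc)
    also have "sc A g = (Ph ^^ n) 1 * g" using PA by (simp add: E_scale_def)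
    finally have e1: "h ((Ph ^^ n) 1) = (Ph ^^ n) 1 * g" .
    have e2: "h ((Ph ^^ n) 1) = (Ph ^^ n) 1 * cmul (\<lambda>j. qch \<tau> n j ^ n) g"
      using comm_pow[OF comm, of n 1] Ph_pow[of n g] unfolding g_def by simp
    have gfix: "g = cmul (\<lambda>j. qch \<tau> n j ^ n) g"
      using e1 e2 Ph_pow_one_nz[of n] by simp
    have gk: "g $$ k = 0" if "k \<noteq> 0" for k
    proof -
      have "g $$ k = qch \<tau> n k ^ n * g $$ k" using gfix by (metis cmul_nth)
      moreover have "qch \<tau> n k ^ n \<noteq> 1"
      proof
        assume "qch \<tau> n k ^ n = 1"
        then have "norm (qpow \<tau> (of_int k)) = 1"
          using n1 by (simp add: qch_def qpow_mult_nat)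
        then have "exp (- 2 * pi * Im \<tau> * of_int k) = 1" by (simp add: norm_qpow)
        then have "- 2 * pi * Im \<tau> * of_int k = 0" by simp
        then show False using tau that pi_gt_zero by simp
      qed
      ultimately show ?thesis by (metis mult_cancel_right2)
    qed
    define a where "a = g $$ 0"
    have ga: "g = fls_const a" unfolding a_def by (rule fls_eqI) (auto simp: gk)
    have "h m = sc (fls_const a) m" for m
    proof -
      have lin2: "Vector_Spaces.linear sc sc (sc (fls_const a))"
        unfolding lin_iff E_scale_def using n1 by (simp add: emb_const algebra_simps)
      show ?thesis
      proof (rule vector_space_pair.linear_eq_on[OF vsp lin lin2])
        show "m \<in> module.span sc ((\<lambda>k. (Ph ^^ k) 1) ` {..<n})" using orbit_basis(3)[OF cop, of 1] by simp
        fix b assume "b \<in> (\<lambda>k. (Ph ^^ k) 1) ` {..<n}"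
        then obtain k where b: "b = (Ph ^^ k) 1" by auto
        have "h b = (Ph ^^ k) g" unfolding b g_def by (rule comm_pow[OF comm])
        also have "\<dots> = (Ph ^^ k) 1 * fls_const a"
          unfolding ga by (subst Ph_pow) (simp add: cmul_const[OF is_char_power[OF is_char_qch]])
        also have "\<dots> = sc (fls_const a) b" unfolding b E_scale_def using n1 by (simp add: emb_const)
        finally show "h b = sc (fls_const a) b" .
      qed
    qed
    then show "h \<in> range (\<lambda>a::complex. sc (fls_const a))" by auto
  qed
qed

end

lemma E_iso_root:
  assumes n1: "n \<ge> 1" and cop: "coprime t (int n)" and c0: "c \<noteq> 0" and eq: "c ^ n = c' ^ n"
  shows "diff_iso (E_scale n) (E_Phi \<tau> t n c) (E_scale n) (E_Phi \<tau> t n c')"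
proof -
  interpret E1: Emod \<tau> t n c using n1 c0 by unfold_locales
  define \<zeta> where "\<zeta> = c' / c"
  have c'0: "c' \<noteq> 0"
  proof
    assume "c' = 0"
    then have "c ^ n = 0" using eq n1 by simp
    then show False using c0 by simp
  qed
  have zn: "\<zeta> ^ n = 1" unfolding \<zeta>_def using eq c0 c'0 by (simp add: power_divide)
  have z0: "\<zeta> \<noteq> 0" using zn n1 by (metis one_neq_zero power_0_left le_numeral_extra(2) not_one_le_zero)
  obtain u v where uv: "u * t + v * int n = 1"
    using bezout_int[of t "int n"] cop by (auto simp: coprime_iff_gcd_eq_1)
  define \<eta> where "\<eta> = \<zeta> powi u"
  have e0: "\<eta> \<noteq> 0" unfolding \<eta>_def using z0 by simp
  have zpn: "\<zeta> powi (int n * m) = 1" for m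
    by (simp add: power_int_mult zn)
  have en: "\<eta> powi (int n * m) = 1" for m
  proof -
    have "\<eta> powi (int n * m) = \<zeta> powi (u * (int n * m))" unfolding \<eta>_def by (simp add: power_int_mult)
    also have "u * (int n * m) = int n * (u * m)" by (simp add: algebra_simps)
    finally show ?thesis using zpn by simp
  qed
  have et: "\<eta> powi t = \<zeta>"
  proof -
    have "\<eta> powi t = \<zeta> powi (u * t)" unfolding \<eta>_def by (simp add: power_int_mult)
    also have "u * t = 1 + int n * (- v)" using uv by (simp add: algebra_simps)
    also have "\<zeta> powi (1 + int n * (- v)) = \<zeta> * \<zeta> powi (int n * (- v))"
      using power_int_add[of \<zeta> 1 "int n * (- v)"] z0 by simp
    finally show ?thesis using zpn[of "- v"] by simp
  qed
  define \<chi> where "\<chi> k = \<eta> powi k" for k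
  have ch: "is_char \<chi>" unfolding is_char_def \<chi>_def using e0 by (simp add: power_int_add)
  define G where "G = cmul \<chi>"
  have Gemb: "G (emb n f) = emb n f" for f
  proof (rule fls_eqI)
    fix k show "G (emb n f) $$ k = emb n f $$ k"
    proof (cases "int n dvd k")
      case True then obtain m where "k = int n * m" by blast
      then show ?thesis unfolding G_def using n1 by (simp add: emb_nth \<chi>_def en)
    qed (use n1 in \<open>simp add: G_def emb_nth\<close>)
  qed
  have comm: "cmul \<chi> (cmul (qch \<tau> n) m) = cmul (qch \<tau> n) (cmul \<chi> m)" for m
    by (simp add: cmul_comp mult.commute)
  have GPh: "G (E_Phi \<tau> t n c m) = E_Phi \<tau> t n c' (G m)" for m
  proof -
    have "G (E_Phi \<tau> t n c m) = fls_const c * (fls_const (\<chi> t) * fls_X_intpow t) * cmul (qch \<tau> n) (cmul \<chi> m)"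
      unfolding G_def E1.Ph_def' by (simp add: cmul_mult[OF ch] cmul_const[OF ch] cmul_X comm)
    also have "\<dots> = fls_const (c * \<chi> t) * fls_X_intpow t * cmul (qch \<tau> n) (cmul \<chi> m)"
      by (simp add: fls_const_mult_const[symmetric] algebra_simps del: fls_const_mult_const)
    also have "c * \<chi> t = c'" unfolding \<chi>_def et \<zeta>_def using c0 by simp
    finally show ?thesis by (simp add: E_Phi_def sigma_cmul G_def)
  qed
  have lin: "Vector_Spaces.linear (E_scale n) (E_scale n) G"
    unfolding E1.lin_iff E_scale_def G_def using Gemb[unfolded G_def]
    by (simp add: cmul_add cmul_mult[OF ch])
  have bij: "bij G"
    unfolding G_def
    by (rule o_bij[of "cmul (\<lambda>k. inverse (\<chi> k))"]) (auto simp: cmul_inverse_cancel[OF ch] cmul_inverse_cancel2[OF ch])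
  show ?thesis unfolding diff_iso_def using lin bij GPh by blast
qed

context Emod begin

lemma shift_iso:
  "diff_iso sc Ph (E_scale n) (E_Phi \<tau> t n (c / qch \<tau> n k))"
proof -
  define H where "H m = fls_X_intpow k * m" for m :: "complex fls"
  have qk: "qch \<tau> n k \<noteq> 0" using char_nz[OF is_char_qch] .
  have lin: "Vector_Spaces.linear sc sc H" unfolding lin_iff H_def E_scale_def by (simp add: algebra_simps)
  have comm: "H (Ph m) = E_Phi \<tau> t n (c / qch \<tau> n k) (H m)" for m
  proof -
    have "E_Phi \<tau> t n (c / qch \<tau> n k) (H m) = fls_const (c / qch \<tau> n k) * fls_X_intpow t * (fls_const (qch \<tau> n k) * fls_X_intpow k * cmul (qch \<tau> n) m)"
      unfolding E_Phi_def sigma_cmul H_def by (simp add: cmul_mult[OF is_char_qch] cmul_X)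
    also have "\<dots> = (fls_const (c / qch \<tau> n k) * fls_const (qch \<tau> n k)) * fls_X_intpow k * (fls_X_intpow t * cmul (qch \<tau> n) m)"
      by (simp add: algebra_simps)
    also have "fls_const (c / qch \<tau> n k) * fls_const (qch \<tau> n k) = fls_const c"
      using qk by (simp add: fls_const_mult_const)
    finally show ?thesis unfolding H_def Ph_def' by (simp add: algebra_simps)
  qed
  have X1: "fls_X_intpow (-k) * fls_X_intpow k = (1::complex fls)"
    using fls_X_intpow_times_fls_X_intpow[of "-k" k, where 'a=complex] by simp
  have X2: "fls_X_intpow k * fls_X_intpow (-k) = (1::complex fls)"
    using fls_X_intpow_times_fls_X_intpow[of k "-k", where 'a=complex] by simp
  have XX: "fls_X_intpow (-k) * (fls_X_intpow k * m) = m" "fls_X_intpow k * (fls_X_intpow (-k) * m) = m" for m :: "complex fls"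
    by (simp_all only: mult.assoc[symmetric] X1 X2 mult_1_left)
  have bij: "bij H" unfolding H_def
    by (rule o_bij[of "\<lambda>m. fls_X_intpow (-k) * m"]; rule ext; simp only: comp_apply XX id_apply)
  show ?thesis unfolding diff_iso_def using lin bij comm by blast
qed

end

lemma diff_iso_trans:
  assumes "diff_iso s1 P1 s2 P2" "diff_iso s2 P2 s3 P3"
  shows "diff_iso s1 P1 s3 P3"
proof -
  obtain h1 where h1: "bij h1" "Vector_Spaces.linear s1 s2 h1" "\<forall>m. h1 (P1 m) = P2 (h1 m)"
    using assms(1) unfolding diff_iso_def by blast
  obtain h2 where h2: "bij h2" "Vector_Spaces.linear s2 s3 h2" "\<forall>m. h2 (P2 m) = P3 (h2 m)"
    using assms(2) unfolding diff_iso_def by blast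
  have "bij (h2 \<circ> h1)" using h1 h2 by (simp add: bij_comp)
  moreover have "Vector_Spaces.linear s1 s3 (h2 \<circ> h1)" using h1 h2 Vector_Spaces.linear_compose by blast
  moreover have "\<forall>m. (h2 \<circ> h1) (P1 m) = P3 ((h2 \<circ> h1) m)" using h1 h2 by simp
  ultimately show ?thesis unfolding diff_iso_def by blast
qed

lemma semilin_span:
  fixes sc :: "complex fls \<Rightarrow> 'b::ab_group_add \<Rightarrow> 'b"
  assumes md: "module sc" and add: "\<And>x y. \<Phi> (x + y) = \<Phi> x + \<Phi> y"
    and sl: "\<And>f m. \<Phi> (sc f m) = sc (\<phi> f) (\<Phi> m)"
    and x: "x \<in> module.span sc X"
  shows "\<Phi> x \<in> module.span sc (\<Phi> ` X)"
proof (rule module.span_induct_alt[OF md x])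
  have "\<Phi> 0 = \<Phi> 0 + \<Phi> 0" using add[of 0 0] by simp
  then have "\<Phi> 0 = 0" by simp
  then show "\<Phi> 0 \<in> module.span sc (\<Phi> ` X)" using module.span_zero[OF md] by simp
next
  fix c x y assume xX: "x \<in> X" and y: "\<Phi> y \<in> module.span sc (\<Phi> ` X)"
  have "\<Phi> (sc c x + y) = sc (\<phi> c) (\<Phi> x) + \<Phi> y" using add sl by simp
  moreover have "sc (\<phi> c) (\<Phi> x) \<in> module.span sc (\<Phi> ` X)"
    using xX by (intro module.span_scale[OF md] module.span_base[OF md]) auto
  ultimately show "\<Phi> (sc c x + y) \<in> module.span sc (\<Phi> ` X)" using y module.span_add[OF md] by simp
qed

lemma cyclic:
  fixes sc :: "complex fls \<Rightarrow> 'b::ab_group_add \<Rightarrow> 'b" and \<Phi> :: "'b \<Rightarrow> 'b"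
  assumes dm: "diff_module (phiK \<tau>) sc \<Phi>" and irr: "irreducible_dm sc \<Phi>"
  shows "\<exists>e d a. e \<noteq> 0 \<and> d \<ge> 1 \<and> inj_on (\<lambda>i. (\<Phi> ^^ i) e) {..<d} \<and>
     \<not> module.dependent sc ((\<lambda>i. (\<Phi> ^^ i) e) ` {..<d}) \<and>
     module.span sc ((\<lambda>i. (\<Phi> ^^ i) e) ` {..<d}) = UNIV \<and>
     (\<Phi> ^^ d) e + (\<Sum>i<d. sc (a i) ((\<Phi> ^^ i) e)) = 0"
proof -
  have vs: "vector_space sc" and add: "\<And>x y. \<Phi> (x + y) = \<Phi> x + \<Phi> y"
    and sl: "\<And>f m. \<Phi> (sc f m) = sc (phiK \<tau> f) (\<Phi> m)"
    using dm unfolding diff_module_def by auto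
  obtain B where fB: "finite B" and spB: "module.span sc B = UNIV" using dm unfolding diff_module_def by auto
  interpret vector_space sc by (rule vs)
  obtain e :: 'b where e: "e \<noteq> 0" using irr unfolding irreducible_dm_def by auto
  define V where "V k = (\<lambda>i. (\<Phi> ^^ i) e) ` {..<k}" for k
  have Vsuc: "V (Suc k) = insert ((\<Phi> ^^ k) e) (V k)" for k by (simp add: V_def lessThan_Suc)
  have finV: "finite (V k)" for k by (simp add: V_def)
  have indk: "independent (V k) \<and> card (V k) = k"
    if H: "\<And>j. j < k \<Longrightarrow> (\<Phi> ^^ j) e \<notin> span (V j)" for k
    using H
  proof (induction k)
    case 0 then show ?case using independent_empty by (simp add: V_def)
  next
    case (Suc k)
    then have IH: "independent (V k) \<and> card (V k) = k" by simp
    have nx: "(\<Phi> ^^ k) e \<notin> span (V k)" using Suc.prems by simp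
    then have "(\<Phi> ^^ k) e \<notin> V k" using span_base by blast
    then show ?case using IH nx finV unfolding Vsuc by (simp add: independent_insert)
  qed
  have ex: "\<exists>k. (\<Phi> ^^ k) e \<in> span (V k)"
  proof (rule ccontr)
    assume "\<not> ?thesis"
    then have "independent (V (Suc (card B))) \<and> card (V (Suc (card B))) = Suc (card B)"
      using indk by blast
    then show False using independent_span_bound[OF fB, of "V (Suc (card B))"] spB by simp
  qed
  define d where "d = (LEAST k. (\<Phi> ^^ k) e \<in> span (V k))"
  have Pd: "(\<Phi> ^^ d) e \<in> span (V d)" unfolding d_def using ex by (rule LeastI_ex)
  have notP: "(\<Phi> ^^ k) e \<notin> span (V k)" if "k < d" for k
    using that unfolding d_def by (rule not_less_Least)
  have indd: "independent (V d)" and cardd: "card (V d) = d" using indk[of d] notP by auto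
  have d1: "d \<ge> 1"
  proof (rule ccontr)
    assume "\<not> d \<ge> 1" then have "d = 0" by simp
    then show False using Pd e by (simp add: V_def)
  qed
  have inj: "inj_on (\<lambda>i. (\<Phi> ^^ i) e) {..<d}"
    by (rule eq_card_imp_inj_on) (use cardd in \<open>simp_all add: V_def\<close>)
  have PhV: "\<Phi> ` V d \<subseteq> span (V d)"
  proof
    fix y assume "y \<in> \<Phi> ` V d"
    then obtain i where i: "i < d" "y = (\<Phi> ^^ Suc i) e" by (auto simp: V_def)
    show "y \<in> span (V d)"
    proof (cases "Suc i < d")
      case True
      have "(\<Phi> ^^ Suc i) e \<in> V d" unfolding V_def using True by blast
      then show ?thesis using i by (intro span_base) simp
    next
      case False then have "Suc i = d" using i by simp
      then show ?thesis using i Pd by simp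
    qed
  qed
  have stable: "\<Phi> ` span (V d) \<subseteq> span (V d)"
  proof
    fix y assume "y \<in> \<Phi> ` span (V d)"
    then obtain x where x: "x \<in> span (V d)" "y = \<Phi> x" by auto
    have md: "module sc" using vs by (simp add: module_iff_vector_space)
    have "\<Phi> x \<in> span (\<Phi> ` V d)"
      by (rule semilin_span[OF md add sl x(1)])
    also have "span (\<Phi> ` V d) \<subseteq> span (V d)" using PhV by (simp add: span_minimal)
    finally show "y \<in> span (V d)" using x by simp
  qed
  have "span (V d) = {0} \<or> span (V d) = UNIV"
    using irr stable unfolding irreducible_dm_def by auto
  moreover have "e \<in> span (V d)" using d1 by (intro span_base) (auto simp: V_def intro!: image_eqI[of _ _ 0])
  ultimately have spV: "span (V d) = UNIV" using e by auto
  obtain u where u: "(\<Phi> ^^ d) e = (\<Sum>v\<in>V d. sc (u v) v)" using Pd span_finite[OF finV[of d]] by auto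
  also have "\<dots> = (\<Sum>i<d. sc (u ((\<Phi> ^^ i) e)) ((\<Phi> ^^ i) e))"
    unfolding V_def by (simp add: sum.reindex[OF inj])
  finally have rel: "(\<Phi> ^^ d) e + (\<Sum>i<d. sc (- u ((\<Phi> ^^ i) e)) ((\<Phi> ^^ i) e)) = 0"
    by (simp add: sum_negf)
  show ?thesis
    apply (rule exI[of _ e], rule exI[of _ d], rule exI[of _ "\<lambda>i. - u ((\<Phi> ^^ i) e)"])
    using e d1 inj indd spV rel by (simp add: V_def)
qed


context Emod begin

lemma Ph_zero: "Ph 0 = 0"
  by (simp add: Ph_def')

lemma morph:
  fixes scM :: "complex fls \<Rightarrow> 'b::ab_group_add \<Rightarrow> 'b" and \<Phi> :: "'b \<Rightarrow> 'b"
  assumes dm: "diff_module (phiK \<tau>) scM \<Phi>" and irr: "irreducible_dm scM \<Phi>"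
    and cop: "coprime t (int n)"
    and d1: "d \<ge> 1" and inj: "inj_on (\<lambda>i. (\<Phi> ^^ i) e) {..<d}"
    and ind: "\<not> module.dependent scM ((\<lambda>i. (\<Phi> ^^ i) e) ` {..<d})"
    and spn: "module.span scM ((\<lambda>i. (\<Phi> ^^ i) e) ` {..<d}) = UNIV"
    and rel: "(\<Phi> ^^ d) e + (\<Sum>i<d. scM (a i) ((\<Phi> ^^ i) e)) = 0"
    and g0: "g \<noteq> 0" and relg: "(Ph ^^ d) g + (\<Sum>i<d. sc (a i) ((Ph ^^ i) g)) = 0"
  shows "diff_iso scM \<Phi> sc Ph"
proof -
  have vsM: "vector_space scM" and addM: "\<And>x y. \<Phi> (x + y) = \<Phi> x + \<Phi> y"
    and slM: "\<And>f m. \<Phi> (scM f m) = scM (phiK \<tau> f) (\<Phi> m)"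
    using dm unfolding diff_module_def by auto
  have mdM: "module scM" using vsM by (simp add: module_iff_vector_space)
  have vsp: "vector_space_pair scM sc" by (simp add: vector_space_pair_def vsM vs)
  define V where "V = (\<lambda>i. (\<Phi> ^^ i) e) ` {..<d}"
  define idx where "idx = the_inv_into {..<d} (\<lambda>i. (\<Phi> ^^ i) e)"
  define f where "f v = (Ph ^^ idx v) g" for v
  define h where "h = vector_space_pair.construct scM sc V f"
  have indV: "\<not> module.dependent scM V" using ind unfolding V_def .
  have hb: "h ((\<Phi> ^^ i) e) = (Ph ^^ i) g" if "i < d" for i
  proof -
    have "h ((\<Phi> ^^ i) e) = f ((\<Phi> ^^ i) e)"
      unfolding h_def by (rule vector_space_pair.construct_basis[OF vsp indV]) (use that in \<open>auto simp: V_def\<close>)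
    moreover have "idx ((\<Phi> ^^ i) e) = i" unfolding idx_def using the_inv_into_f_f[OF inj] that by simp
    ultimately show ?thesis unfolding f_def by simp
  qed
  have lin: "Vector_Spaces.linear scM sc h"
    unfolding h_def by (rule vector_space_pair.linear_construct[OF vsp indV])
  interpret L: Vector_Spaces.linear scM sc h by (rule lin)
  have PhM0: "\<Phi> 0 = 0"
  proof -
    have "\<Phi> 0 = \<Phi> 0 + \<Phi> 0" using addM[of 0 0] by simp
    then show ?thesis by simp
  qed
  define C where "C = {m. h (\<Phi> m) = Ph (h m)}"
  have subC: "module.subspace scM C"
  proof (rule module.subspaceI[OF mdM])
    show "0 \<in> C" unfolding C_def using PhM0 Ph_zero by simp
    fix x y assume "x \<in> C" "y \<in> C"
    then show "x + y \<in> C" unfolding C_def by (simp add: addM L.add Ph_add)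
  next
    fix c x assume "x \<in> C"
    then show "scM c x \<in> C" unfolding C_def by (simp add: slM L.scale Ph_semilin)
  qed
  have VC: "V \<subseteq> C"
  proof
    fix v assume "v \<in> V"
    then obtain i where i: "i < d" "v = (\<Phi> ^^ i) e" by (auto simp: V_def)
    show "v \<in> C" unfolding C_def
    proof (cases "Suc i < d")
      case True
      have "h (\<Phi> v) = h ((\<Phi> ^^ Suc i) e)" using i by simp
      also have "\<dots> = (Ph ^^ Suc i) g" using hb[OF True] .
      also have "\<dots> = Ph (h v)" using hb[OF i(1)] i by simp
      finally show "v \<in> {m. h (\<Phi> m) = Ph (h m)}" by simp
    next
      case False
      then have di: "d = Suc i" using i by simp
      have "\<Phi> v = (\<Phi> ^^ d) e" using i di by simp
      also have "\<dots> = - (\<Sum>j<d. scM (a j) ((\<Phi> ^^ j) e))" using rel by (simp add: eq_neg_iff_add_eq_0)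
      finally have "h (\<Phi> v) = - (\<Sum>j<d. sc (a j) (h ((\<Phi> ^^ j) e)))"
        by (simp add: L.neg L.sum L.scale)
      also have "\<dots> = - (\<Sum>j<d. sc (a j) ((Ph ^^ j) g))"
        by (simp add: hb)
      also have "\<dots> = (Ph ^^ d) g" using relg[unfolded add_eq_0_iff] by simp
      also have "\<dots> = Ph (h v)" using hb[OF i(1)] i di by simp
      finally show "v \<in> {m. h (\<Phi> m) = Ph (h m)}" by simp
    qed
  qed
  have "module.span scM V \<subseteq> C" using module.span_minimal[OF mdM VC subC] .
  then have comm: "\<forall>m. h (\<Phi> m) = Ph (h m)" using spn unfolding V_def C_def by auto
  have he: "h e = g" using hb[of 0] d1 by simp
  define K where "K = {m. h m = 0}"
  have subK: "module.subspace scM K" unfolding K_def by (rule L.subspace_kernel)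
  have "\<Phi> ` K \<subseteq> K" unfolding K_def using comm Ph_zero by auto
  then have "K = {0} \<or> K = UNIV" using irr subK unfolding irreducible_dm_def by blast
  moreover have "e \<notin> K" unfolding K_def using he g0 by simp
  ultimately have K0: "K = {0}" by auto
  have injh: "inj h" unfolding L.inj_iff_eq_0 using K0 unfolding K_def by auto
  have subR: "module.subspace sc (range h)" by (rule L.subspace_image) (simp add: module.subspace_UNIV[OF mdM])
  have "Ph ` range h \<subseteq> range h" using comm by (auto intro: range_eqI[of _ h, OF comm[rule_format, symmetric]])
  then have "range h = {0} \<or> range h = UNIV" using irred[OF cop] subR unfolding irreducible_dm_def by blast
  moreover have "g \<in> range h" using he by auto
  ultimately have surjh: "range h = UNIV" using g0 by auto
  have "bij h" using injh surjh by (simp add: bij_def)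
  then show ?thesis unfolding diff_iso_def using lin comm by blast
qed

end


lemma const_X_nth: "(fls_const a * fls_X_intpow m * (f :: complex fls)) $$ N = a * f $$ (N - m)"
proof -
  have "(fls_const a * fls_X_intpow m * f) $$ N = (fls_const a * (fls_X_intpow m * f)) $$ N"
    by (simp only: mult.assoc)
  also have "\<dots> = a * f $$ (N - m)" by (simp add: fls_X_intpow_times_conv_shift)
  finally show ?thesis .
qed

lemma comm_pow2: "(\<forall>m. h (P1 m) = P2 (h m)) \<Longrightarrow> h ((P1 ^^ k) m) = (P2 ^^ k) (h m)"
  by (induction k) auto

lemma iso_key:
  fixes scM :: "complex fls \<Rightarrow> 'b::ab_group_add \<Rightarrow> 'b" and \<Phi> :: "'b \<Rightarrow> 'b"
  assumes dm: "diff_module (phiK \<tau>) scM \<Phi>"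
    and n1: "n \<ge> 1" and iso1: "diff_iso scM \<Phi> (E_scale n) (E_Phi \<tau> t n c)"
    and n1': "n' \<ge> 1" and iso2: "diff_iso scM \<Phi> (E_scale n') (E_Phi \<tau> t' n' c')"
  shows "\<exists>g. g \<noteq> 0 \<and> (\<forall>k A. (E_Phi \<tau> t n c ^^ k) 1 = E_scale n A 1 \<longrightarrow>
           emb n' A * g = (E_Phi \<tau> t' n' c' ^^ k) g)"
proof -
  obtain h1 where h1: "bij h1" "Vector_Spaces.linear scM (E_scale n) h1" "\<forall>m. h1 (\<Phi> m) = E_Phi \<tau> t n c (h1 m)"
    using iso1 unfolding diff_iso_def by blast
  obtain h2 where h2: "bij h2" "Vector_Spaces.linear scM (E_scale n') h2" "\<forall>m. h2 (\<Phi> m) = E_Phi \<tau> t' n' c' (h2 m)"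
    using iso2 unfolding diff_iso_def by blast
  interpret L1: Vector_Spaces.linear scM "E_scale n" h1 by (rule h1(2))
  interpret L2: Vector_Spaces.linear scM "E_scale n'" h2 by (rule h2(2))
  define m0 where "m0 = inv h1 1"
  have hm0: "h1 m0 = 1" unfolding m0_def using h1(1) by (simp add: bij_is_surj surj_f_inv_f)
  define g where "g = h2 m0"
  have g0: "g \<noteq> 0"
  proof
    assume "g = 0"
    then have "h2 m0 = h2 0" unfolding g_def using L2.zero by simp
    then have "m0 = 0" using h2(1) by (metis bij_is_inj injD)
    then show False using hm0 by simp
  qed
  have "emb n' A * g = (E_Phi \<tau> t' n' c' ^^ k) g" if A: "(E_Phi \<tau> t n c ^^ k) 1 = E_scale n A 1" for k A
  proof -
    have "h1 ((\<Phi> ^^ k) m0) = (E_Phi \<tau> t n c ^^ k) (h1 m0)" by (rule comm_pow2[OF h1(3)])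
    also have "\<dots> = E_scale n A (h1 m0)" using A hm0 by simp
    also have "\<dots> = h1 (scM A m0)" by (simp add: L1.scale)
    finally have "(\<Phi> ^^ k) m0 = scM A m0" using h1(1) by (simp add: bij_is_inj inj_eq)
    then have "h2 ((\<Phi> ^^ k) m0) = E_scale n' A g" unfolding g_def by (simp add: L2.scale)
    moreover have "h2 ((\<Phi> ^^ k) m0) = (E_Phi \<tau> t' n' c' ^^ k) g" unfolding g_def by (rule comm_pow2[OF h2(3)])
    ultimately show ?thesis by (simp add: E_scale_def)
  qed
  then show ?thesis using g0 by blast
qed

lemma uniq_tn:
  fixes scM :: "complex fls \<Rightarrow> 'b::ab_group_add \<Rightarrow> 'b" and \<Phi> :: "'b \<Rightarrow> 'b"
  assumes dm: "diff_module (phiK \<tau>) scM \<Phi>"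
    and n1: "n \<ge> 1" and cop1: "coprime t (int n)" and c0: "c \<noteq> 0" and iso1: "diff_iso scM \<Phi> (E_scale n) (E_Phi \<tau> t n c)"
    and n1': "n' \<ge> 1" and cop2: "coprime t' (int n')" and c0': "c' \<noteq> 0" and iso2: "diff_iso scM \<Phi> (E_scale n') (E_Phi \<tau> t' n' c')"
  shows "t = t' \<and> n = n'"
proof -
  interpret E1: Emod \<tau> t n c using n1 c0 by unfold_locales
  interpret E2: Emod \<tau> t' n' c' using n1' c0' by unfold_locales
  obtain g where g0: "g \<noteq> 0" and key: "\<And>k A. (E_Phi \<tau> t n c ^^ k) 1 = E_scale n A 1 \<Longrightarrow>
           emb n' A * g = (E_Phi \<tau> t' n' c' ^^ k) g"
    using iso_key[OF dm n1 iso1 n1' iso2] by blast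
  define A where "A = fls_const (c ^ (n * n') * E1.R (n * n')) * fls_X_intpow (t * int n')"
  have "(E_Phi \<tau> t n c ^^ (n * n')) 1 = E_scale n A 1"
    unfolding E1.Ph_pow_one A_def E_scale_def using n1 by (simp add: emb_mult emb_const emb_X algebra_simps)
  then have eq: "emb n' A * g = (E_Phi \<tau> t' n' c' ^^ (n * n')) g" by (rule key)
  have A0: "A \<noteq> 0" unfolding A_def using c0 E1.R_nz by (simp add: fls_mult_fls_X_intpow_nonzero)
  have sdA: "fls_subdegree A = t * int n'" unfolding A_def using c0 E1.R_nz by (simp add: fls_subdegree_mult_fls_X_intpow)
  have "fls_subdegree (emb n' A * g) = int n' * (t * int n') + fls_subdegree g"
    using A0 g0 n1' by (simp add: fls_subdegree_mult emb_eq0_iff emb_subdegree sdA)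
  moreover have "fls_subdegree ((E_Phi \<tau> t' n' c' ^^ (n * n')) g) = t' * int (n * n') + fls_subdegree g"
    by (rule E2.Ph_pow_sd[OF g0])
  ultimately have "int n' * (t * int n') + fls_subdegree g = t' * int (n * n') + fls_subdegree g"
    using eq by metis
  then have H: "int n' * (t * int n') = t' * int (n * n')" by linarith
  have "int n' * (t' * int n) = t' * int (n * n')" by (simp add: algebra_simps)
  with H have H2: "int n' * (t * int n') = int n' * (t' * int n)" by metis
  have "int n' \<noteq> 0" using n1' by simp
  then have tn: "t * int n' = t' * int n" using H2 mult_left_cancel by blast
  have d1: "int n dvd int n'"
  proof -
    have "int n dvd t * int n'" using tn by simp
    then show ?thesis using cop1 by (metis coprime_commute coprime_dvd_mult_right_iff)
  qed
  have d2: "int n' dvd int n"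
  proof -
    have "int n' dvd t' * int n" using tn[symmetric] by simp
    then show ?thesis using cop2 by (metis coprime_commute coprime_dvd_mult_right_iff)
  qed
  have "n = n'" using d1 d2 by (simp add: dvd_antisym)
  then show ?thesis using tn n1 by simp
qed

lemma uniq_c:
  fixes scM :: "complex fls \<Rightarrow> 'b::ab_group_add \<Rightarrow> 'b" and \<Phi> :: "'b \<Rightarrow> 'b"
  assumes tau: "Im \<tau> > 0" and dm: "diff_module (phiK \<tau>) scM \<Phi>"
    and n1: "n \<ge> 1" and c0: "c \<noteq> 0" and iso1: "diff_iso scM \<Phi> (E_scale n) (E_Phi \<tau> t n c)"
    and c0': "c' \<noteq> 0" and iso2: "diff_iso scM \<Phi> (E_scale n) (E_Phi \<tau> t n c')"
    and nc1: "exp (- 2 * pi * Im \<tau>) < norm (c ^ n)" "norm (c ^ n) \<le> 1"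
    and nc2: "exp (- 2 * pi * Im \<tau>) < norm (c' ^ n)" "norm (c' ^ n) \<le> 1"
  shows "c ^ n = c' ^ n"
proof -
  interpret E1: Emod \<tau> t n c using n1 c0 by unfold_locales
  interpret E2: Emod \<tau> t n c' using n1 c0' by unfold_locales
  obtain g where g0: "g \<noteq> 0" and key: "\<And>k A. (E_Phi \<tau> t n c ^^ k) 1 = E_scale n A 1 \<Longrightarrow>
           emb n A * g = (E_Phi \<tau> t n c' ^^ k) g"
    using iso_key[OF dm n1 iso1 n1 iso2] by blast
  define A where "A = fls_const (c ^ n * E1.R n) * fls_X_intpow t"
  have "(E_Phi \<tau> t n c ^^ n) 1 = E_scale n A 1"
    unfolding E1.Ph_pow_one A_def E_scale_def using n1 by (simp add: emb_mult emb_const emb_X algebra_simps)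
  then have eq: "emb n A * g = (E_Phi \<tau> t n c' ^^ n) g" by (rule key)
  also have "\<dots> = fls_const (c' ^ n * E1.R n) * fls_X_intpow (t * int n) * cmul (\<lambda>j. qch \<tau> n j ^ n) g"
    by (subst E2.Ph_pow) (simp add: E2.Ph_pow_one)
  finally have eq2: "fls_const (c ^ n * E1.R n) * fls_X_intpow (t * int n) * g =
     fls_const (c' ^ n * E1.R n) * fls_X_intpow (t * int n) * cmul (\<lambda>j. qch \<tau> n j ^ n) g"
    unfolding A_def using n1 by (simp add: emb_mult emb_const emb_X algebra_simps)
  define v where "v = fls_subdegree g"
  have "(fls_const (c ^ n * E1.R n) * fls_X_intpow (t * int n) * g) $$ (t * int n + v) =
        (fls_const (c' ^ n * E1.R n) * fls_X_intpow (t * int n) * cmul (\<lambda>j. qch \<tau> n j ^ n) g) $$ (t * int n + v)"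
    by (simp only: eq2)
  then have "c ^ n * E1.R n * g $$ v = c' ^ n * E1.R n * (qch \<tau> n v ^ n * g $$ v)"
    by (simp only: const_X_nth) simp
  moreover have "g $$ v \<noteq> 0" unfolding v_def using g0 by simp
  ultimately have cc: "c ^ n = c' ^ n * qch \<tau> n v ^ n" using E1.R_nz by simp
  have qv: "qch \<tau> n v ^ n = qpow \<tau> (of_int v)" using n1 by (simp add: qch_def qpow_mult_nat)
  define L where "L = 2 * pi * Im \<tau>"
  have L0: "L > 0" unfolding L_def using tau by simp
  have nq: "norm (qch \<tau> n v ^ n) = exp (- L * of_int v)" unfolding qv L_def by (simp add: norm_qpow)
  have nrm: "norm (c ^ n) = norm (c' ^ n) * exp (- L * of_int v)" using cc nq by (simp add: norm_mult)
  have ex: "exp (- 2 * pi * Im \<tau>) = exp (- L)" unfolding L_def by simp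
  have "v = 0"
  proof (rule ccontr)
    assume "v \<noteq> 0"
    then consider "v \<ge> 1" | "v \<le> -1" by linarith
    then show False
    proof cases
      case 1
      then have "exp (- L * of_int v) \<le> exp (- L)" using L0 by (simp add: mult_le_cancel_left)
      then have "norm (c ^ n) \<le> 1 * exp (- L)" unfolding nrm using nc2(2)
        by (intro mult_mono) auto
      then show False using nc1(1) ex by simp
    next
      case 2
      have "L * 1 \<le> L * (- real_of_int v)" using 2 L0 by (intro mult_left_mono) auto
      then have "exp L \<le> exp (- L * of_int v)" by simp
      have a: "norm (c' ^ n) * exp (- L * of_int v) \<ge> norm (c' ^ n) * exp L"
        using \<open>exp L \<le> exp (- L * of_int v)\<close> by (intro mult_left_mono) auto
      have b: "norm (c' ^ n) * exp L > exp (- L) * exp L"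
        using nc2(1) ex by (intro mult_strict_right_mono) auto
      have "exp (- L) * exp L = 1" by (simp add: exp_minus)
      then have "norm (c ^ n) > 1" using a b nrm by simp
      then show False using nc1(2) by simp
    qed
  qed
  then show ?thesis using cc qv by simp
qed

fun solve_seq :: "(nat \<Rightarrow> nat \<Rightarrow> complex) \<Rightarrow> nat \<Rightarrow> complex" where
  "solve_seq D K = (if K = 0 then 1 else - (\<Sum>k<K. D K k * solve_seq D k) / D K K)"

declare solve_seq.simps[simp del]

lemma solve_seq_0: "solve_seq D 0 = 1"
  by (simp add: solve_seq.simps)

lemma solve_seq_prop:
  assumes "K \<ge> 1" "D K K \<noteq> 0"
  shows "(\<Sum>k\<le>K. D K k * solve_seq D k) = 0"
proof -
  have s: "solve_seq D K = - (\<Sum>k<K. D K k * solve_seq D k) / D K K"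
    using assms by (simp add: solve_seq.simps)
  have "(\<Sum>k\<le>K. D K k * solve_seq D k) = (\<Sum>k<K. D K k * solve_seq D k) + D K K * solve_seq D K"
    by (simp add: lessThan_Suc_atMost[symmetric])
  also have "\<dots> = 0" unfolding s using assms(2) by simp
  finally show ?thesis .
qed

lemma times_nth_bounds:
  fixes f h :: "complex fls"
  assumes f: "\<And>m. m < L \<Longrightarrow> f $$ m = 0" and h: "\<And>m. m < L' \<Longrightarrow> h $$ m = 0"
  shows "(f * h) $$ N = (\<Sum>i = L..N - L'. f $$ i * h $$ (N - i))"
proof (cases "f = 0 \<or> h = 0")
  case True then show ?thesis by auto
next
  case False
  then have f0: "f \<noteq> 0" and h0: "h \<noteq> 0" by auto
  have Lf: "L \<le> fls_subdegree f"
  proof (rule ccontr)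
    assume "\<not> L \<le> fls_subdegree f"
    then have "f $$ fls_subdegree f = 0" using f by simp
    then show False using f0 by simp
  qed
  have Lh: "L' \<le> fls_subdegree h"
  proof (rule ccontr)
    assume "\<not> L' \<le> fls_subdegree h"
    then have "h $$ fls_subdegree h = 0" using h by simp
    then show False using h0 by simp
  qed
  have "(f * h) $$ N = (\<Sum>i = fls_subdegree f..N - fls_subdegree h. f $$ i * h $$ (N - i))"
    by (rule fls_times_nth(2))
  also have "\<dots> = (\<Sum>i = L..N - L'. f $$ i * h $$ (N - i))"
  proof (rule sum.mono_neutral_left)
    show "{fls_subdegree f..N - fls_subdegree h} \<subseteq> {L..N - L'}" using Lf Lh by auto
    show "\<forall>i\<in>{L..N - L'} - {fls_subdegree f..N - fls_subdegree h}. f $$ i * h $$ (N - i) = 0"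
    proof
      fix i assume "i \<in> {L..N - L'} - {fls_subdegree f..N - fls_subdegree h}"
      then have "i < fls_subdegree f \<or> N - i < fls_subdegree h" by auto
      then show "f $$ i * h $$ (N - i) = 0" by auto
    qed
  qed simp
  finally show ?thesis .
qed

lemma sum_int_to_nat:
  fixes h :: "int \<Rightarrow> 'a::comm_monoid_add"
  shows "(\<Sum>j = w..w + int K. h j) = (\<Sum>k\<le>K. h (w + int K - int k))"
proof -
  have "bij_betw (\<lambda>k. w + int K - int k) {..K} {w..w + int K}"
  proof (rule bij_betw_imageI)
    show "inj_on (\<lambda>k. w + int K - int k) {..K}" by (auto simp: inj_on_def)
    show "(\<lambda>k. w + int K - int k) ` {..K} = {w..w + int K}"
    proof
      show "(\<lambda>k. w + int K - int k) ` {..K} \<subseteq> {w..w + int K}" by auto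
      show "{w..w + int K} \<subseteq> (\<lambda>k. w + int K - int k) ` {..K}"
      proof
        fix j assume j: "j \<in> {w..w + int K}"
        then have "j = w + int K - int (nat (w + int K - j))" "nat (w + int K - j) \<in> {..K}" by auto
        then show "j \<in> (\<lambda>k. w + int K - int k) ` {..K}" by blast
      qed
    qed
  qed
  from sum.reindex_bij_betw[OF this, of h] show ?thesis by simp
qed


lemma poly_root_choice:
  fixes Q :: "nat \<Rightarrow> complex" and r :: "nat \<Rightarrow> complex"
  assumes i01: "i0 < i1" "i1 \<le> d" and Q0: "Q i0 \<noteq> 0" and Q1: "Q i1 \<noteq> 0"
    and Qlow: "\<And>i. i < i0 \<Longrightarrow> Q i = 0"
    and rr: "\<And>K. K \<ge> 1 \<Longrightarrow> norm (r K) < 1 \<and> r K \<noteq> 0"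
  shows "\<exists>c. c \<noteq> 0 \<and> (\<Sum>i\<le>d. Q i * c ^ i) = 0 \<and> (\<forall>K\<ge>1. (\<Sum>i\<le>d. Q i * (c * r K) ^ i) \<noteq> 0)"
proof -
  define D' where "D' = d - i0"
  define P1 where "P1 = (\<Sum>j\<le>D'. monom (Q (i0 + j)) j)"
  have polyP: "(\<Sum>i\<le>d. Q i * x ^ i) = x ^ i0 * poly P1 x" for x
  proof -
    have "(\<Sum>i\<le>d. Q i * x ^ i) = (\<Sum>i\<in>{i0..d}. Q i * x ^ i)"
      by (rule sum.mono_neutral_right) (use Qlow in auto)
    also have "{i0..d} = {0 + i0..D' + i0}" unfolding D'_def using i01 by auto
    also have "(\<Sum>i\<in>{0 + i0..D' + i0}. Q i * x ^ i) = (\<Sum>j = 0..D'. Q (j + i0) * x ^ (j + i0))"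
      by (rule sum.shift_bounds_cl_nat_ivl)
    also have "\<dots> = x ^ i0 * (\<Sum>j\<le>D'. Q (i0 + j) * x ^ j)"
      by (simp add: sum_distrib_left atLeast0AtMost power_add algebra_simps)
    also have "(\<Sum>j\<le>D'. Q (i0 + j) * x ^ j) = poly P1 x"
      unfolding P1_def by (simp add: poly_sum poly_monom)
    finally show ?thesis .
  qed
  have coeffP: "coeff P1 j = (if j \<le> D' then Q (i0 + j) else 0)" for j
    unfolding P1_def by (simp add: coeff_sum coeff_monom)
  have P10: "P1 \<noteq> 0" using coeffP[of 0] Q0 by auto
  have "i1 - i0 \<le> D'" unfolding D'_def using i01 by simp
  then have "coeff P1 (i1 - i0) \<noteq> 0" using coeffP[of "i1 - i0"] Q1 i01 by simp
  then have "i1 - i0 \<le> degree P1" by (rule le_degree)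
  then have "\<not> constant (poly P1)" using i01 by (simp add: constant_degree)
  then obtain z where "poly P1 z = 0" using fundamental_theorem_of_algebra by blast
  define Z where "Z = {x. poly P1 x = 0}"
  have finZ: "finite Z" unfolding Z_def using poly_roots_finite[OF P10] .
  have neZ: "Z \<noteq> {}" unfolding Z_def using \<open>poly P1 z = 0\<close> by auto
  have Z0: "0 \<notin> Z" unfolding Z_def using coeffP[of 0] Q0 by (simp add: poly_0_coeff_0)
  define m where "m = Min (norm ` Z)"
  have "m \<in> norm ` Z" unfolding m_def using finZ neZ by (intro Min_in) auto
  then obtain c where cZ: "c \<in> Z" and cm: "norm c = m" by auto
  have cmin: "norm c \<le> norm z" if "z \<in> Z" for z unfolding cm m_def using finZ that by simp
  have c0: "c \<noteq> 0" using cZ Z0 by auto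
  have "(\<Sum>i\<le>d. Q i * c ^ i) = 0" using polyP[of c] cZ unfolding Z_def by simp
  moreover have "(\<Sum>i\<le>d. Q i * (c * r K) ^ i) \<noteq> 0" if K: "K \<ge> 1" for K
  proof -
    have rK: "norm (r K) < 1" "r K \<noteq> 0" using rr[OF K] by auto
    have x0: "c * r K \<noteq> 0" using c0 rK by simp
    have "norm (c * r K) < norm c" using rK c0 by (simp add: norm_mult)
    then have "c * r K \<notin> Z" using cmin by force
    then have "poly P1 (c * r K) \<noteq> 0" unfolding Z_def by simp
    then show ?thesis using polyP[of "c * r K"] x0 by simp
  qed
  ultimately show ?thesis using c0 by blast
qed


lemma rat_frac_le:
  fixes a b c e :: int
  assumes "b > 0" "e > 0"
  shows "(rat_of_int a / rat_of_int b \<le> rat_of_int c / rat_of_int e) \<longleftrightarrow> a * e \<le> c * b"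
proof -
  have "(rat_of_int a / rat_of_int b \<le> rat_of_int c / rat_of_int e) \<longleftrightarrow>
        rat_of_int a * rat_of_int e \<le> rat_of_int c * rat_of_int b"
    using assms by (simp add: field_simps)
  also have "\<dots> \<longleftrightarrow> a * e \<le> c * b" by (simp only: of_int_mult[symmetric] of_int_le_iff)
  finally show ?thesis .
qed

lemma rat_frac_eq:
  fixes a b c e :: int
  assumes "b > 0" "e > 0"
  shows "(rat_of_int a / rat_of_int b = rat_of_int c / rat_of_int e) \<longleftrightarrow> a * e = c * b"
proof -
  have "(rat_of_int a / rat_of_int b = rat_of_int c / rat_of_int e) \<longleftrightarrow>
        rat_of_int a * rat_of_int e = rat_of_int c * rat_of_int b"
    using assms by (simp add: field_simps)
  also have "\<dots> \<longleftrightarrow> a * e = c * b" by (simp only: of_int_mult[symmetric] of_int_eq_iff)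
  finally show ?thesis .
qed

lemma newton:
  fixes b :: "nat \<Rightarrow> complex fls"
  assumes bd: "b d \<noteq> 0" and ex: "\<exists>i<d. b i \<noteq> 0"
  shows "\<exists>t n i0 i1 \<omega>. n \<ge> 1 \<and> coprime t (int n) \<and> i0 < i1 \<and> i1 \<le> d \<and> b i0 \<noteq> 0 \<and> b i1 \<noteq> 0 \<and>
     (\<forall>i<i0. b i = 0) \<and> \<omega> = int n * fls_subdegree (b i0) + t * int i0 \<and>
     \<omega> = int n * fls_subdegree (b i1) + t * int i1 \<and>
     (\<forall>i\<le>d. b i \<noteq> 0 \<longrightarrow> int n * fls_subdegree (b i) + t * int i \<ge> \<omega>)"
proof -
  define A where "A = {i. i \<le> d \<and> b i \<noteq> 0}"
  have finA: "finite A" unfolding A_def by simp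
  have dA: "d \<in> A" unfolding A_def using bd by simp
  define i0 where "i0 = Min A"
  have i0A: "i0 \<in> A" unfolding i0_def using finA dA by (intro Min_in) auto
  have i0min: "i0 \<le> i" if "i \<in> A" for i unfolding i0_def using finA that by simp
  obtain j where j: "j < d" "b j \<noteq> 0" using ex by blast
  have "j \<in> A" unfolding A_def using j by simp
  then have i0d: "i0 < d" using i0min j by fastforce
  have blow: "\<forall>i<i0. b i = 0"
  proof (intro allI impI)
    fix i assume ii: "i < i0"
    show "b i = 0"
    proof (rule ccontr)
      assume "b i \<noteq> 0"
      then have "i \<in> A" unfolding A_def using ii i0d by simp
      then show False using i0min ii by fastforce
    qed
  qed
  define od where "od i = fls_subdegree (b i)" for i
  define sl where "sl i = rat_of_int (od i0 - od i) / rat_of_int (int i - int i0)" for i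
  define I where "I = {i \<in> A. i0 < i}"
  have finI: "finite I" unfolding I_def using finA by simp
  have dI: "d \<in> I" unfolding I_def using dA i0d by simp
  define lam where "lam = Max (sl ` I)"
  have "lam \<in> sl ` I" unfolding lam_def using finI dI by (intro Min_in Max_in) auto
  then obtain i1 where i1I: "i1 \<in> I" and i1l: "sl i1 = lam" by auto
  have slle: "sl i \<le> lam" if "i \<in> I" for i unfolding lam_def using finI that by simp
  obtain t n0 where q: "quotient_of lam = (t, n0)" by (cases "quotient_of lam") auto
  have n0: "n0 > 0" using quotient_of_denom_pos[OF q] .
  have cop0: "coprime t n0" using quotient_of_coprime[OF q] .
  have lq: "lam = rat_of_int t / rat_of_int n0" using quotient_of_div[OF q] .
  define n where "n = nat n0"
  have nn0: "int n = n0" unfolding n_def using n0 by simp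
  have ineq: "int n * od i + t * int i \<ge> int n * od i0 + t * int i0" if "i \<in> I" for i
  proof -
    have pos: "int i - int i0 > 0" using that unfolding I_def by simp
    have "sl i \<le> rat_of_int t / rat_of_int n0" using slle[OF that] lq by simp
    then have "rat_of_int (od i0 - od i) / rat_of_int (int i - int i0) \<le> rat_of_int t / rat_of_int n0"
      unfolding sl_def .
    then have "(od i0 - od i) * n0 \<le> t * (int i - int i0)"
      by (rule rat_frac_le[OF pos n0, THEN iffD1])
    then show ?thesis unfolding nn0 by (simp add: algebra_simps)
  qed
  have eq1: "int n * od i1 + t * int i1 = int n * od i0 + t * int i0"
  proof -
    have pos: "int i1 - int i0 > 0" using i1I unfolding I_def by simp
    have "sl i1 = rat_of_int t / rat_of_int n0" using i1l lq by simp
    then have "rat_of_int (od i0 - od i1) / rat_of_int (int i1 - int i0) = rat_of_int t / rat_of_int n0"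
      unfolding sl_def .
    then have "(od i0 - od i1) * n0 = t * (int i1 - int i0)"
      by (rule rat_frac_eq[OF pos n0, THEN iffD1])
    then show ?thesis unfolding nn0 by (simp add: algebra_simps)
  qed
  have all: "int n * od i + t * int i \<ge> int n * od i0 + t * int i0" if "i \<le> d" "b i \<noteq> 0" for i
  proof (cases "i = i0")
    case False
    then have "i \<in> I" using that i0min unfolding I_def A_def by fastforce
    then show ?thesis by (rule ineq)
  qed simp
  show ?thesis
    apply (rule exI[of _ t], rule exI[of _ n], rule exI[of _ i0], rule exI[of _ i1],
           rule exI[of _ "int n * od i0 + t * int i0"])
    using n0 cop0 nn0 i1I i0A blow eq1 all unfolding I_def A_def od_def
    by (auto simp: n_def)
qed


lemma solve_exists:
  assumes tau: "Im \<tau> > 0" and d1: "d \<ge> 1" and nz: "\<exists>i<d. a i \<noteq> 0"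
  shows "\<exists>t n c g. n \<ge> 1 \<and> coprime t (int n) \<and> c \<noteq> 0 \<and> g \<noteq> 0 \<and>
     (E_Phi \<tau> t n c ^^ d) g + (\<Sum>i<d. E_scale n (a i) ((E_Phi \<tau> t n c ^^ i) g)) = 0"
proof -
  define b where "b i = (if i < d then a i else 1)" for i
  have bd: "b d \<noteq> 0" by (simp add: b_def)
  have ex: "\<exists>i<d. b i \<noteq> 0" using nz by (auto simp: b_def)
  obtain t n i0 i1 \<omega> where n1: "n \<ge> 1" and cop: "coprime t (int n)" and i01: "i0 < i1" "i1 \<le> d"
    and bi0: "b i0 \<noteq> 0" and bi1: "b i1 \<noteq> 0" and blow: "\<forall>i<i0. b i = 0"
    and w0: "\<omega> = int n * fls_subdegree (b i0) + t * int i0"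
    and w1: "\<omega> = int n * fls_subdegree (b i1) + t * int i1"
    and wall: "\<forall>i\<le>d. b i \<noteq> 0 \<longrightarrow> int n * fls_subdegree (b i) + t * int i \<ge> \<omega>"
    using newton[OF bd ex] by (elim exE conjE) (rule that; assumption)
  interpret E0: Emod \<tau> t n 1 using n1 by unfold_locales auto
  define R where "R = Emod.R \<tau> t n"
  have Rnz: "R i \<noteq> 0" for i unfolding R_def using E0.R_nz .
  define Q where "Q i = (if int n dvd (\<omega> - t * int i) then b i $$ ((\<omega> - t * int i) div int n) else 0) * R i" for i
  have Qe: "Q i \<noteq> 0" if "b i \<noteq> 0" "\<omega> = int n * fls_subdegree (b i) + t * int i" for i
  proof -
    have "\<omega> - t * int i = int n * fls_subdegree (b i)" using that by simp
    then show ?thesis unfolding Q_def using that n1 Rnz by simp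
  qed
  have Qlow: "Q i = 0" if "i < i0" for i unfolding Q_def using blow that by simp
  define r where "r K = qch \<tau> n (int K)" for K :: nat
  have rr: "norm (r K) < 1 \<and> r K \<noteq> 0" if K: "K \<ge> 1" for K
  proof
    have pos: "of_rat (of_int (int K) / of_nat n :: rat) > (0::real)" using K n1 by (simp add: zero_less_divide_iff)
    have "norm (r K) = exp (- 2 * pi * Im \<tau> * of_rat (of_int (int K) / of_nat n))"
      unfolding r_def qch_def by (rule norm_qpow)
    also have "\<dots> < 1" using tau pos by (simp add: mult_pos_pos)
    finally show "norm (r K) < 1" .
    show "r K \<noteq> 0" unfolding r_def using char_nz[OF is_char_qch] .
  qed
  have PR: "\<exists>c. c \<noteq> 0 \<and> (\<Sum>i\<le>d. Q i * c ^ i) = 0 \<and> (\<forall>K\<ge>1. (\<Sum>i\<le>d. Q i * (c * r K) ^ i) \<noteq> 0)"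
    by (rule poly_root_choice[OF i01 Qe[OF bi0 w0] Qe[OF bi1 w1]]) (use Qlow rr in auto)
  then obtain c where c0: "c \<noteq> 0" and Pc: "(\<Sum>i\<le>d. Q i * c ^ i) = 0"
    and PK: "\<forall>K\<ge>1. (\<Sum>i\<le>d. Q i * (c * r K) ^ i) \<noteq> 0"
    by blast
  interpret E: Emod \<tau> t n c using n1 c0 by unfold_locales
  have ER: "E.R = R" unfolding R_def ..
  define F where "F i = emb n (b i) * (E.Ph ^^ i) 1" for i
  have F_nth: "F i $$ m = c ^ i * R i * (if int n dvd (m - t * int i) then b i $$ ((m - t * int i) div int n) else 0)" for i m
  proof -
    have "F i = fls_const (c ^ i * R i) * fls_X_intpow (t * int i) * emb n (b i)"
      unfolding F_def E.Ph_pow_one ER by (simp add: algebra_simps)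
    then have "F i $$ m = c ^ i * R i * emb n (b i) $$ (m - t * int i)" by (simp only: const_X_nth)
    then show ?thesis using n1 by (simp add: emb_nth)
  qed
  have F_low: "F i $$ m = 0" if i: "i \<le> d" and m: "m < \<omega>" for i m
  proof (cases "b i = 0")
    case True then show ?thesis unfolding F_def using n1 by simp
  next
    case False
    show ?thesis
    proof (cases "int n dvd (m - t * int i)")
      case True
      then obtain q where q: "m - t * int i = int n * q" by blast
      have "int n * fls_subdegree (b i) + t * int i \<ge> \<omega>" using wall i False by blast
      then have "int n * q < int n * fls_subdegree (b i)" using q m by linarith
      then have "q < fls_subdegree (b i)" using n1 by (simp add: mult_less_cancel_left)
      then show ?thesis unfolding F_nth using q True n1 by simp
    qed (simp add: F_nth)
  qed
  have F_w: "F i $$ \<omega> = Q i * c ^ i" for i unfolding F_nth Q_def by (simp add: algebra_simps)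
  define D where "D K k = (\<Sum>i\<le>d. F i $$ (\<omega> + int K - int k) * qch \<tau> n (int k) ^ i)" for K k
  have DKK: "D K K = (\<Sum>i\<le>d. Q i * (c * r K) ^ i)" for K
    unfolding D_def r_def by (simp add: F_w power_mult_distrib algebra_simps)
  have D00: "D 0 0 = 0" using DKK[of 0] Pc unfolding r_def by (simp add: qch_def)
  define gs where "gs = solve_seq D"
  define g where "g = Abs_fls (\<lambda>k. if k \<ge> 0 then gs (nat k) else 0)"
  have g_nth: "g $$ k = (if k \<ge> 0 then gs (nat k) else 0)" for k
    unfolding g_def by (rule nth_Abs_fls_lower_bound[of 0]) auto
  have g0: "g \<noteq> 0"
  proof
    assume "g = 0"
    then have "g $$ 0 = 0" by simp
    then show False using g_nth[of 0] by (simp add: gs_def solve_seq_0)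
  qed
  define G where "G i = cmul (\<lambda>j. qch \<tau> n j ^ i) g" for i
  have Tdef: "(E.Ph ^^ d) g + (\<Sum>i<d. E_scale n (a i) ((E.Ph ^^ i) g)) = (\<Sum>i\<le>d. F i * G i)"
  proof -
    have "(\<Sum>i\<le>d. F i * G i) = (\<Sum>i<d. F i * G i) + F d * G d"
      by (simp add: lessThan_Suc_atMost[symmetric])
    also have "F d * G d = (E.Ph ^^ d) g"
      unfolding F_def G_def b_def using n1 by (simp add: emb_one E.Ph_pow[of d g])
    also have "(\<Sum>i<d. F i * G i) = (\<Sum>i<d. E_scale n (a i) ((E.Ph ^^ i) g))"
    proof (rule sum.cong[OF refl])
      fix i assume "i \<in> {..<d}"
      then show "F i * G i = E_scale n (a i) ((E.Ph ^^ i) g)"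
        unfolding F_def G_def b_def E_scale_def by (simp add: E.Ph_pow[of i g] mult.assoc)
    qed
    finally show ?thesis by (simp add: add.commute)
  qed
  have coef: "(\<Sum>i\<le>d. F i * G i) $$ N = 0" for N
  proof -
    have G_nth: "G i $$ m = qch \<tau> n m ^ i * g $$ m" for i m unfolding G_def by simp
    have Glow: "G i $$ m = 0" if "m < 0" for i m using that by (simp add: G_nth g_nth)
    have prod: "(F i * G i) $$ N = (\<Sum>j = \<omega>..N - 0. F i $$ j * G i $$ (N - j))" if "i \<le> d" for i
      by (rule times_nth_bounds) (use F_low[OF that] Glow in auto)
    show ?thesis
    proof (cases "N < \<omega>")
      case True
      then show ?thesis by (simp add: fls_nth_sum prod)
    next
      case False
      define K where "K = nat (N - \<omega>)"
      have NK: "N = \<omega> + int K" unfolding K_def using False by simp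
      have "(\<Sum>i\<le>d. F i * G i) $$ N = (\<Sum>i\<le>d. (F i * G i) $$ N)" by (simp add: fls_nth_sum)
      also have "\<dots> = (\<Sum>i\<le>d. \<Sum>k\<le>K. F i $$ (\<omega> + int K - int k) * (qch \<tau> n (int k) ^ i * gs k))"
      proof (rule sum.cong[OF refl])
        fix i assume i: "i \<in> {..d}"
        have "(F i * G i) $$ N = (\<Sum>j = \<omega>..\<omega> + int K. F i $$ j * G i $$ (\<omega> + int K - j))"
          using prod[of i] i NK by simp
        also have "\<dots> = (\<Sum>k\<le>K. F i $$ (\<omega> + int K - int k) * G i $$ (\<omega> + int K - (\<omega> + int K - int k)))"
          by (rule sum_int_to_nat)
        also have "\<dots> = (\<Sum>k\<le>K. F i $$ (\<omega> + int K - int k) * (qch \<tau> n (int k) ^ i * gs k))"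
          by (simp add: G_nth g_nth)
        finally show "(F i * G i) $$ N = (\<Sum>k\<le>K. F i $$ (\<omega> + int K - int k) * (qch \<tau> n (int k) ^ i * gs k))" .
      qed
      also have "\<dots> = (\<Sum>k\<le>K. \<Sum>i\<le>d. F i $$ (\<omega> + int K - int k) * (qch \<tau> n (int k) ^ i * gs k))"
        by (rule sum.swap[where A="{..d}" and B="{..K}" and g="\<lambda>i k. F i $$ (\<omega> + int K - int k) * (qch \<tau> n (int k) ^ i * gs k)"])
      also have "\<dots> = (\<Sum>k\<le>K. D K k * gs k)"
        unfolding D_def sum_distrib_right by (simp only: mult.assoc)
      also have "\<dots> = 0"
      proof (cases "K = 0")
        case True then show ?thesis using D00 by (simp add: gs_def solve_seq_0)
      next
        case False
        then have "K \<ge> 1" by simp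
        then have K1: "K \<ge> 1" by simp
        have "D K K \<noteq> 0" using DKK[of K] PK K1 by simp
        then show ?thesis unfolding gs_def by (rule solve_seq_prop[OF K1])
      qed
      finally show ?thesis .
    qed
  qed
  have "(\<Sum>i\<le>d. F i * G i) = 0" by (rule fls_eqI) (simp add: coef)
  then have "(E.Ph ^^ d) g + (\<Sum>i<d. E_scale n (a i) ((E.Ph ^^ i) g)) = 0" using Tdef by simp
  then show ?thesis using n1 cop c0 g0 by (intro exI[of _ t] exI[of _ n] exI[of _ c] exI[of _ g]) simp
qed

lemma norm_qch_pow: assumes "n \<ge> 1" shows "norm (qch \<tau> n k ^ n) = exp (- 2 * pi * Im \<tau> * of_int k)"
proof -
  have "qch \<tau> n k ^ n = qpow \<tau> (of_int k)" using assms by (simp add: qch_def qpow_mult_nat)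
  then show ?thesis by (simp add: norm_qpow)
qed

lemma norm_qch_pow': assumes "n \<ge> 1" shows "norm (qch \<tau> n k) ^ n = exp (- 2 * pi * Im \<tau> * of_int k)"
  using norm_qch_pow[OF assms, of \<tau> k] by (simp add: norm_power)

lemma normalize_exists:
  assumes tau: "Im \<tau> > 0" and n1: "n \<ge> 1" and c0: "c \<noteq> 0"
  shows "\<exists>k::int. exp (- 2 * pi * Im \<tau>) < norm ((c / qch \<tau> n k) ^ n) \<and> norm ((c / qch \<tau> n k) ^ n) \<le> 1"
proof -
  define L where "L = 2 * pi * Im \<tau>"
  have L0: "L > 0" unfolding L_def using tau by simp
  define x where "x = norm c ^ n"
  have x0: "x > 0" unfolding x_def using c0 by simp
  define y where "y = - ln x / L"
  define k where "k = floor y"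
  have ky: "of_int k \<le> y" "y < of_int k + 1" unfolding k_def by linarith+
  have nrm: "norm ((c / qch \<tau> n k) ^ n) = x * exp (L * of_int k)"
  proof -
    have "norm ((c / qch \<tau> n k) ^ n) = norm (c ^ n) / norm (qch \<tau> n k ^ n)" by (simp add: power_divide norm_divide)
    also have "\<dots> = x / exp (- L * of_int k)" unfolding x_def L_def using n1 by (simp add: norm_qch_pow' norm_power)
    also have "\<dots> = x * exp (L * of_int k)" by (simp add: exp_minus field_simps)
    finally show ?thesis .
  qed
  have xe: "x = exp (ln x)" using x0 by simp
  have "x * exp (L * of_int k) = exp (ln x + L * of_int k)" by (subst xe) (simp add: exp_add)
  moreover have "ln x + L * of_int k \<le> 0"
  proof -
    have "L * of_int k \<le> L * y" using ky L0 by (intro mult_left_mono) auto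
    also have "L * y = - ln x" unfolding y_def using L0 by simp
    finally show ?thesis by simp
  qed
  moreover have "ln x + L * of_int k > - L"
  proof -
    have "L * y < L * (of_int k + 1)" using ky L0 by (intro mult_strict_left_mono) auto
    then have "- ln x < L * of_int k + L" unfolding y_def using L0 by (simp add: algebra_simps)
    then show ?thesis by simp
  qed
  ultimately have "exp (- L) < norm ((c / qch \<tau> n k) ^ n) \<and> norm ((c / qch \<tau> n k) ^ n) \<le> 1"
    unfolding nrm by auto
  then show ?thesis unfolding L_def by auto
qed


lemma exists_part:
  fixes sc :: "complex fls \<Rightarrow> 'b::ab_group_add \<Rightarrow> 'b" and \<Phi> :: "'b \<Rightarrow> 'b"
  assumes tau: "Im \<tau> > 0" and dm: "diff_module (phiK \<tau>) sc \<Phi>" and irr: "irreducible_dm sc \<Phi>"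
  shows "\<exists>t n c. n \<ge> 1 \<and> coprime t (int n) \<and> exp (- 2 * pi * Im \<tau>) < norm (c ^ n) \<and> norm (c ^ n) \<le> 1 \<and>
            diff_iso sc \<Phi> (E_scale n) (E_Phi \<tau> t n c)"
proof -
  obtain e d a where e0: "e \<noteq> 0" and d1: "d \<ge> 1" and inj: "inj_on (\<lambda>i. (\<Phi> ^^ i) e) {..<d}"
    and ind: "\<not> module.dependent sc ((\<lambda>i. (\<Phi> ^^ i) e) ` {..<d})"
    and spn: "module.span sc ((\<lambda>i. (\<Phi> ^^ i) e) ` {..<d}) = UNIV"
    and rel: "(\<Phi> ^^ d) e + (\<Sum>i<d. sc (a i) ((\<Phi> ^^ i) e)) = 0"
    using cyclic[OF dm irr] by blast
  have vs: "vector_space sc" and bij: "bij \<Phi>" and add: "\<And>x y. \<Phi> (x + y) = \<Phi> x + \<Phi> y"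
    using dm unfolding diff_module_def by auto
  have Ph0: "\<Phi> 0 = 0"
  proof -
    have "\<Phi> 0 = \<Phi> 0 + \<Phi> 0" using add[of 0 0] by simp
    then show ?thesis by simp
  qed
  have nz: "\<exists>i<d. a i \<noteq> 0"
  proof (rule ccontr)
    assume "\<not> ?thesis"
    then have "\<forall>i<d. a i = 0" by simp
    then have "(\<Sum>i<d. sc (a i) ((\<Phi> ^^ i) e)) = 0"
      using module.scale_zero_left[OF vs[unfolded module_iff_vector_space[symmetric]]] by simp
    moreover have fz: "(\<Phi> ^^ k) 0 = 0" for k by (induction k) (simp_all add: Ph0)
    ultimately have "(\<Phi> ^^ d) e = (\<Phi> ^^ d) 0" using rel by simp
    then have "e = 0" using inj_fn[OF bij_is_inj[OF bij], of d] by (simp add: inj_eq)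
    then show False using e0 by simp
  qed
  obtain t n c g where n1: "n \<ge> 1" and cop: "coprime t (int n)" and c0: "c \<noteq> 0" and g0: "g \<noteq> 0"
    and relg: "(E_Phi \<tau> t n c ^^ d) g + (\<Sum>i<d. E_scale n (a i) ((E_Phi \<tau> t n c ^^ i) g)) = 0"
    using solve_exists[OF tau d1 nz] by blast
  interpret E: Emod \<tau> t n c using n1 c0 by unfold_locales
  have iso1: "diff_iso sc \<Phi> (E_scale n) (E_Phi \<tau> t n c)"
    by (rule E.morph[OF dm irr cop d1 inj ind spn rel g0 relg])
  obtain k where k: "exp (- 2 * pi * Im \<tau>) < norm ((c / qch \<tau> n k) ^ n)" "norm ((c / qch \<tau> n k) ^ n) \<le> 1"
    using normalize_exists[OF tau n1 c0] by blast
  have "diff_iso sc \<Phi> (E_scale n) (E_Phi \<tau> t n (c / qch \<tau> n k))"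
    by (rule diff_iso_trans[OF iso1 E.shift_iso])
  then show ?thesis using n1 cop k by blast
qed

theorem proposition1p3:
  fixes \<tau> :: complex
  assumes tau: "Im \<tau> > 0"
  defines "q \<equiv> exp (2 * of_real pi * \<i> * \<tau>)"
  shows
    \<comment> \<open>(1) up to isomorphism E depends only on t, n, c^n\<close>
    "(\<forall>(t::int) (n::nat) (c::complex) (c'::complex).
        n \<ge> 1 \<and> coprime t (int n) \<and>
        norm q powr (1 / real n) < norm c \<and> norm c \<le> 1 \<and>
        norm q powr (1 / real n) < norm c' \<and> norm c' \<le> 1 \<and> c ^ n = c' ^ n \<longrightarrow>
        diff_iso (E_scale n) (E_Phi \<tau> t n c) (E_scale n) (E_Phi \<tau> t n c'))
   \<and>
    \<comment> \<open>(2) E is an irreducible difference module of dimension n, pure of slope t/n, End = C\<close>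
    (\<forall>(t::int) (n::nat) (c::complex).
        n \<ge> 1 \<and> coprime t (int n) \<and>
        norm q powr (1 / real n) < norm c \<and> norm c \<le> 1 \<longrightarrow>
        diff_module (phiK \<tau>) (E_scale n) (E_Phi \<tau> t n c) \<and>
        irreducible_dm (E_scale n) (E_Phi \<tau> t n c) \<and>
        vector_space.dim (E_scale n) (UNIV :: complex fls set) = n \<and>
        pure_of_slope (E_scale n) (E_Phi \<tau> t n c) (of_int t / of_nat n) \<and>
        diff_End (E_scale n) (E_Phi \<tau> t n c) = range (\<lambda>a::complex. E_scale n (fls_const a)))
   \<and>
    \<comment> \<open>(3) classification of irreducible difference modules over K\<close>
    (\<forall>(sc :: complex fls \<Rightarrow> 'b::ab_group_add \<Rightarrow> 'b) (\<Phi> :: 'b \<Rightarrow> 'b).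
        diff_module (phiK \<tau>) sc \<Phi> \<and> irreducible_dm sc \<Phi> \<longrightarrow>
        (\<exists>(t::int) (n::nat) (c::complex).
            n \<ge> 1 \<and> coprime t (int n) \<and> norm q < norm (c ^ n) \<and> norm (c ^ n) \<le> 1 \<and>
            diff_iso sc \<Phi> (E_scale n) (E_Phi \<tau> t n c)) \<and>
        (\<forall>(t::int) (n::nat) (c::complex) (t'::int) (n'::nat) (c'::complex).
            n \<ge> 1 \<and> coprime t (int n) \<and> norm q < norm (c ^ n) \<and> norm (c ^ n) \<le> 1 \<and>
            diff_iso sc \<Phi> (E_scale n) (E_Phi \<tau> t n c) \<and>
            n' \<ge> 1 \<and> coprime t' (int n') \<and> norm q < norm (c' ^ n') \<and> norm (c' ^ n') \<le> 1 \<and>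
            diff_iso sc \<Phi> (E_scale n') (E_Phi \<tau> t' n' c') \<longrightarrow>
            t = t' \<and> n = n' \<and> c ^ n = c' ^ n'))"
proof -
  have qn: "norm q = exp (- 2 * pi * Im \<tau>)" unfolding q_def by (simp add: norm_exp_eq_Re)
  have cnz: "c \<noteq> 0" if "norm q powr (1 / real n) < norm c" for c :: complex and n
  proof
    assume "c = 0"
    then have "norm q powr (1 / real n) < 0" using that by simp
    moreover have "norm q powr (1 / real n) \<ge> 0" by simp
    ultimately show False by simp
  qed
  have P1: "diff_iso (E_scale n) (E_Phi \<tau> t n c) (E_scale n) (E_Phi \<tau> t n c')"
    if "n \<ge> 1 \<and> coprime t (int n) \<and>
        norm q powr (1 / real n) < norm c \<and> norm c \<le> 1 \<and>
        norm q powr (1 / real n) < norm c' \<and> norm c' \<le> 1 \<and> c ^ n = c' ^ n" for t n c c'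
    using E_iso_root[of n t c c' \<tau>] that cnz by blast
  have P2: "diff_module (phiK \<tau>) (E_scale n) (E_Phi \<tau> t n c) \<and>
        irreducible_dm (E_scale n) (E_Phi \<tau> t n c) \<and>
        vector_space.dim (E_scale n) (UNIV :: complex fls set) = n \<and>
        pure_of_slope (E_scale n) (E_Phi \<tau> t n c) (of_int t / of_nat n) \<and>
        diff_End (E_scale n) (E_Phi \<tau> t n c) = range (\<lambda>a::complex. E_scale n (fls_const a))"
    if H: "n \<ge> 1 \<and> coprime t (int n) \<and> norm q powr (1 / real n) < norm c \<and> norm c \<le> 1" for t n c
  proof -
    have c0: "c \<noteq> 0" using H cnz by blast
    interpret E: Emod \<tau> t n c using H c0 by unfold_locales auto
    have cop: "coprime t (int n)" using H by blast
    show ?thesis using E.diff_mod E.irred[OF cop] E.dim_n E.pure[OF cop] E.End[OF tau cop] by blast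
  qed
  have P3: "(\<exists>(t::int) (n::nat) (c::complex).
            n \<ge> 1 \<and> coprime t (int n) \<and> norm q < norm (c ^ n) \<and> norm (c ^ n) \<le> 1 \<and>
            diff_iso sc \<Phi> (E_scale n) (E_Phi \<tau> t n c)) \<and>
        (\<forall>(t::int) (n::nat) (c::complex) (t'::int) (n'::nat) (c'::complex).
            n \<ge> 1 \<and> coprime t (int n) \<and> norm q < norm (c ^ n) \<and> norm (c ^ n) \<le> 1 \<and>
            diff_iso sc \<Phi> (E_scale n) (E_Phi \<tau> t n c) \<and>
            n' \<ge> 1 \<and> coprime t' (int n') \<and> norm q < norm (c' ^ n') \<and> norm (c' ^ n') \<le> 1 \<and>
            diff_iso sc \<Phi> (E_scale n') (E_Phi \<tau> t' n' c') \<longrightarrow>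
            t = t' \<and> n = n' \<and> c ^ n = c' ^ n')"
    if H: "diff_module (phiK \<tau>) sc \<Phi> \<and> irreducible_dm sc \<Phi>"
    for sc :: "complex fls \<Rightarrow> 'b::ab_group_add \<Rightarrow> 'b" and \<Phi> :: "'b \<Rightarrow> 'b"
  proof
    have dm: "diff_module (phiK \<tau>) sc \<Phi>" and irr: "irreducible_dm sc \<Phi>" using H by auto
    show "\<exists>(t::int) (n::nat) (c::complex).
            n \<ge> 1 \<and> coprime t (int n) \<and> norm q < norm (c ^ n) \<and> norm (c ^ n) \<le> 1 \<and>
            diff_iso sc \<Phi> (E_scale n) (E_Phi \<tau> t n c)"
      using exists_part[OF tau dm irr] unfolding qn .
    show "\<forall>(t::int) (n::nat) (c::complex) (t'::int) (n'::nat) (c'::complex).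
            n \<ge> 1 \<and> coprime t (int n) \<and> norm q < norm (c ^ n) \<and> norm (c ^ n) \<le> 1 \<and>
            diff_iso sc \<Phi> (E_scale n) (E_Phi \<tau> t n c) \<and>
            n' \<ge> 1 \<and> coprime t' (int n') \<and> norm q < norm (c' ^ n') \<and> norm (c' ^ n') \<le> 1 \<and>
            diff_iso sc \<Phi> (E_scale n') (E_Phi \<tau> t' n' c') \<longrightarrow>
            t = t' \<and> n = n' \<and> c ^ n = c' ^ n'"
    proof (intro allI impI)
      fix t n c t' n' c'
      assume A: "n \<ge> 1 \<and> coprime t (int n) \<and> norm q < norm (c ^ n) \<and> norm (c ^ n) \<le> 1 \<and>
            diff_iso sc \<Phi> (E_scale n) (E_Phi \<tau> t n c) \<and>
            n' \<ge> 1 \<and> coprime t' (int n') \<and> norm q < norm (c' ^ n') \<and> norm (c' ^ n') \<le> 1 \<and>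
            diff_iso sc \<Phi> (E_scale n') (E_Phi \<tau> t' n' c')"
      have q0: "norm q \<ge> 0" by simp
      have nq: "norm q < norm (c ^ n)" "norm q < norm (c' ^ n')" using A by auto
      have nn: "n \<ge> 1" "n' \<ge> 1" using A by auto
      have p1: "norm (c ^ n) > 0" using nq(1) q0 by linarith
      have p2: "norm (c' ^ n') > 0" using nq(2) q0 by linarith
      have c0: "c \<noteq> 0"
      proof
        assume "c = 0" then have "norm (c ^ n) = 0" using nn by simp
        then show False using p1 by simp
      qed
      have c0': "c' \<noteq> 0"
      proof
        assume "c' = 0" then have "norm (c' ^ n') = 0" using nn by simp
        then show False using p2 by simp
      qed
      have tn: "t = t' \<and> n = n'" using uniq_tn[OF dm, of n t c n' t' c'] A c0 c0' by blast
      then have iso2: "diff_iso sc \<Phi> (E_scale n) (E_Phi \<tau> t n c')" using A by simp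
      have "c ^ n = c' ^ n"
        using uniq_c[OF tau dm, of n c t c'] A c0 c0' iso2 tn qn by auto
      then show "t = t' \<and> n = n' \<and> c ^ n = c' ^ n'" using tn by simp
    qed
  qed
  show ?thesis using P1 P2 P3 by blast
qed

end
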